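(* Let $d\in\mathbb{N}$ and $M(t)=t\log(e+t)$, $t>0$. There are constants $0<c_d\le C_d$ depending only on $d$ such that for every measurable function $f$ on $\mathbb{R}^d$, $$c_d\Big(\|f\|_{L_M(\mathbb{R}^d)}+\int_{\mathbb{R}^d}|f(s)|\log(1+|s|)ds\Big)\le \|f\chi_{\mathbb{B}^d}\|_{L_M(\mathbb{R}^d)}+\|(Vf)\chi_{\mathbb{B}^d}\|_{L_M(\mathbb{R}^d)}\le C_d\Big(\|f\|_{L_M(\mathbb{R}^d)}+\int_{\mathbb{R}^d}|f(s)|\log(1+|s|)ds\Big).$$
   Context: $\mathbb{B}^d$ is the unit ball of $\mathbb{R}^d$ with Lebesgue measure. $(Vf)(t)=|t|^{-2d}f(t/|t|^2)$. $\|g\|_{L_M}=\inf\{\lambda>0:\int M(|g|/\lambda)\le1\}$ (Lebesgue measure); quantities may be $+\infty$. *)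

theory Defs
  imports "HOL-Analysis.Analysis"
begin

definition LlogL :: "real \<Rightarrow> real" where
  "LlogL t = t * ln (exp 1 + t)"

text \<open>Luxemburg norm w.r.t. Lebesgue measure, valued in [0, \<infinity>]
  (infimum of the empty set is \<infinity>).\<close>
definition orlicz_norm :: "(real \<Rightarrow> real) \<Rightarrow> ('a::euclidean_space \<Rightarrow> real) \<Rightarrow> ennreal" where
  "orlicz_norm M g = Inf {ennreal l | l. l > 0 \<and>
      (\<integral>\<^sup>+ x. ennreal (M (\<bar>g x\<bar> / l)) \<partial>lebesgue) \<le> 1}"

text \<open>Inversion operator (Vf)(t) = |t|^(-2d) f(t/|t|^2), with d = DIM('a);
  at t = 0 it evaluates to 0 (a null set).\<close>
definition Vop :: "('a::euclidean_space \<Rightarrow> real) \<Rightarrow> 'a \<Rightarrow> real" where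
  "Vop f t = inverse (norm t ^ (2 * DIM('a))) * f (t /\<^sub>R (norm t ^ 2))"

end

theory Submission
  imports Defs "HOL-Analysis.Analysis"
begin

lemma lip_image_measure_aux:
  fixes f :: "'M::euclidean_space \<Rightarrow> 'M"
  assumes "0 < B" "bounded S" "S \<in> sets lebesgue" "0 < e"
      and lips: "\<And>x y. x \<in> S \<Longrightarrow> y \<in> S \<Longrightarrow> norm(f y - f x) \<le> B * norm(y - x)"
  shows "\<exists>W\<in>lmeasurable. f ` S \<subseteq> W \<and> measure lebesgue W \<le> (2 * B * DIM('M)) ^ DIM('M) * (measure lebesgue S + e)"
proof -
  have "S \<in> lmeasurable"
    using assms by (simp add: bounded_set_imp_lmeasurable)
  obtain T where "open T" "S \<subseteq> T" "(T - S) \<in> lmeasurable"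
                 "emeasure lebesgue (T - S) < ennreal e"
    using sets_lebesgue_outer_open [OF \<open>S \<in> sets lebesgue\<close> \<open>0 < e\<close>] by metis
  then have TS: "measure lebesgue (T - S) < e"
    using \<open>0 < e\<close> by (simp add: emeasure_eq_measure2 ennreal_less_iff)
  have Tm: "T \<in> lmeasurable"
    using \<open>S \<in> lmeasurable\<close> \<open>S \<subseteq> T\<close> \<open>T - S \<in> lmeasurable\<close> fmeasurable_Diff_D by blast
  have T: "measure lebesgue T \<le> measure lebesgue S + e"
  proof -
    have "measure lebesgue (T - S) = measure lebesgue T - measure lebesgue S"
      using Tm \<open>S \<in> lmeasurable\<close> \<open>S \<subseteq> T\<close>
      by (intro measure_Diff) (auto simp: fmeasurable_def)
    then show ?thesis using TS by linarith
  qed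
  have "\<exists>r. 0 < r \<and> r \<le> 1/2 \<and>
            (x \<in> S \<longrightarrow> (\<forall>y. norm(y - x) < r \<longrightarrow> y \<in> T))"
        for x
  proof (cases "x \<in> S")
    case True
    then have "x \<in> T"
      using \<open>S \<subseteq> T\<close> by auto
    then obtain \<epsilon> where "0 < \<epsilon>" "ball x \<epsilon> \<subseteq> T"
      by (metis \<open>open T\<close> openE)
    then show ?thesis
      by (rule_tac x="min (1/2) \<epsilon>" in exI) (simp add: dist_norm norm_minus_commute subset_iff)
  next
    case False
    then show ?thesis
      by (rule_tac x="1/4" in exI) auto
  qed
  then obtain R where R12: "\<And>x. 0 < R x \<and> R x \<le> 1/2"
                and RT: "\<And>x y. \<lbrakk>x \<in> S; norm(y - x) < R x\<rbrakk> \<Longrightarrow> y \<in> T"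
    by metis+
  have RB: "\<And>x y. \<lbrakk>x \<in> S; y \<in> S; norm(y - x) < R x\<rbrakk> \<Longrightarrow> norm(f y - f x) \<le> B * norm(y - x)"
    using lips by blast
  then have gaugeR: "gauge (\<lambda>x. ball x (R x))"
    using R12 by (simp add: gauge_def)
  obtain c where c: "S \<subseteq> cbox (-c *\<^sub>R One) (c *\<^sub>R One)" "box (-c *\<^sub>R One:: 'M) (c *\<^sub>R One) \<noteq> {}"
  proof -
    obtain B where B: "\<And>x. x \<in> S \<Longrightarrow> norm x \<le> B"
      using \<open>bounded S\<close> bounded_iff by blast
    show ?thesis
    proof (rule_tac c = "abs B + 1" in that)
      show "S \<subseteq> cbox (- (\<bar>B\<bar> + 1) *\<^sub>R One) ((\<bar>B\<bar> + 1) *\<^sub>R One)"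
        using norm_bound_Basis_le Basis_le_norm
        by (fastforce simp: mem_box dest!: B intro: order_trans)
      show "box (- (\<bar>B\<bar> + 1) *\<^sub>R One) ((\<bar>B\<bar> + 1) *\<^sub>R One) \<noteq> {}"
        by (simp add: box_eq_empty(1))
    qed
  qed
  obtain \<D> where "countable \<D>"
     and Dsub: "\<Union>\<D> \<subseteq> cbox (-c *\<^sub>R One) (c *\<^sub>R One)"
     and cbox: "\<And>K. K \<in> \<D> \<Longrightarrow> interior K \<noteq> {} \<and> (\<exists>c d. K = cbox c d)"
     and pw:   "pairwise (\<lambda>A B. interior A \<inter> interior B = {}) \<D>"
     and Ksub: "\<And>K. K \<in> \<D> \<Longrightarrow> \<exists>x \<in> S \<inter> K. K \<subseteq> (\<lambda>x. ball x (R x)) x"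
     and exN:  "\<And>u v. cbox u v \<in> \<D> \<Longrightarrow> \<exists>n. \<forall>i \<in> Basis. v \<bullet> i - u \<bullet> i = (2*c) / 2^n"
     and "S \<subseteq> \<Union>\<D>"
    using covering_lemma [OF c gaugeR]  by force
  have "\<exists>u v z. K = cbox u v \<and> box u v \<noteq> {} \<and> z \<in> S \<and> z \<in> cbox u v \<and>
                cbox u v \<subseteq> ball z (R z)" if "K \<in> \<D>" for K
  proof -
    obtain u v where "K = cbox u v"
      using \<open>K \<in> \<D>\<close> cbox by blast
    with that show ?thesis
      by (metis Int_iff interior_cbox cbox Ksub)
  qed
  then obtain uf vf zf
    where uvz: "\<And>K. K \<in> \<D> \<Longrightarrow>
                K = cbox (uf K) (vf K) \<and> box (uf K) (vf K) \<noteq> {} \<and> zf K \<in> S \<and>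
                zf K \<in> cbox (uf K) (vf K) \<and> cbox (uf K) (vf K) \<subseteq> ball (zf K) (R (zf K))"
    by metis
  define prj1 where "prj1 \<equiv> \<lambda>x::'M. x \<bullet> (SOME i. i \<in> Basis)"
  define fbx where "fbx \<equiv> \<lambda>D. cbox (f(zf D) - (B * DIM('M) * (prj1(vf D - uf D))) *\<^sub>R One::'M)
                                    (f(zf D) + (B * DIM('M) * prj1(vf D - uf D)) *\<^sub>R One)"
  have vu_pos: "0 < prj1 (vf X - uf X)" if "X \<in> \<D>" for X
    using uvz [OF that] by (simp add: prj1_def box_ne_empty SOME_Basis inner_diff_left)
  have prj1_idem: "prj1 (vf X - uf X) = (vf X - uf X) \<bullet> i" if  "X \<in> \<D>" "i \<in> Basis" for X i
  proof -
    have "cbox (uf X) (vf X) \<in> \<D>"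
      using uvz \<open>X \<in> \<D>\<close> by auto
    with exN obtain n where "\<And>i. i \<in> Basis \<Longrightarrow> vf X \<bullet> i - uf X \<bullet> i = (2*c) / 2^n"
      by blast
    then show ?thesis
      by (simp add: \<open>i \<in> Basis\<close> SOME_Basis inner_diff prj1_def)
  qed
  have countbl: "countable (fbx ` \<D>)"
    using \<open>countable \<D>\<close> by blast
  define E where "E = (2 * B * DIM('M)) ^ DIM('M) * (measure lebesgue S + e)"
  have "(\<Sum>k\<in>fbx`\<D>'. measure lebesgue k) \<le> E" if "\<D>' \<subseteq> \<D>" "finite \<D>'" for \<D>'
  proof -
    have BM_ge0: "0 \<le> B * (DIM('M) * prj1 (vf X - uf X))" if "X \<in> \<D>'" for X
      using \<open>0 < B\<close> \<open>\<D>' \<subseteq> \<D>\<close> that vu_pos by fastforce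
    have "{} \<notin> \<D>'"
      using cbox \<open>\<D>' \<subseteq> \<D>\<close> interior_empty by blast
    have "(\<Sum>k\<in>fbx`\<D>'. measure lebesgue k) \<le> sum (measure lebesgue o fbx) \<D>'"
      by (rule sum_image_le [OF \<open>finite \<D>'\<close>]) (force simp: fbx_def)
    also have "\<dots> \<le> (\<Sum>X\<in>\<D>'. (2 * B * DIM('M)) ^ DIM('M) * measure lebesgue X)"
    proof (rule sum_mono)
      fix X assume "X \<in> \<D>'"
      then have "X \<in> \<D>" using \<open>\<D>' \<subseteq> \<D>\<close> by blast
      then have ufvf: "cbox (uf X) (vf X) = X"
        using uvz by blast
      have "prj1 (vf X - uf X) ^ DIM('M) = (\<Prod>i::'M \<in> Basis. prj1 (vf X - uf X))"
        by (rule prod_constant [symmetric])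
      also have "\<dots> = (\<Prod>i\<in>Basis. vf X \<bullet> i - uf X \<bullet> i)"
        by (simp add: \<open>X \<in> \<D>\<close> inner_diff_left prj1_idem cong: prod.cong)
      finally have prj1_eq: "prj1 (vf X - uf X) ^ DIM('M) = (\<Prod>i\<in>Basis. vf X \<bullet> i - uf X \<bullet> i)" .
      have 0: "0 \<le> prj1 (vf X - uf X)"
        using \<open>X \<in> \<D>\<close> prj1_def vu_pos by fastforce
      have "(measure lebesgue \<circ> fbx) X \<le> (2 * B * DIM('M)) ^ DIM('M) * measure lborel (cbox (uf X) (vf X))"
        apply (simp add: fbx_def content_cbox_cases algebra_simps BM_ge0 \<open>X \<in> \<D>'\<close> \<open>0 < B\<close> flip: prj1_eq)
        using 0 uvz \<open>X \<in> \<D>\<close>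
        by (fastforce simp add: box_ne_empty power_mult_distrib)
      also have "\<dots> = (2 * B * DIM('M)) ^ DIM('M) * measure lebesgue X"
        by (subst (3) ufvf[symmetric]) simp
      finally show "(measure lebesgue \<circ> fbx) X \<le> (2 * B * DIM('M)) ^ DIM('M) * measure lebesgue X" .
    qed
    also have "\<dots> = (2 * B * DIM('M)) ^ DIM('M) * sum (measure lebesgue) \<D>'"
      by (simp add: sum_distrib_left)
    also have "\<dots> \<le> E"
    proof -
      have "\<And>K. K \<in> \<D>' \<Longrightarrow> \<exists>a b. K = cbox a b"
        using cbox that by blast
      then have div: "\<D>' division_of \<Union>\<D>'"
        using pairwise_subset [OF pw \<open>\<D>' \<subseteq> \<D>\<close>] unfolding pairwise_def
        by (force simp: \<open>finite \<D>'\<close> \<open>{} \<notin> \<D>'\<close> division_of_def)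
      have le_meaT: "measure lebesgue (\<Union>\<D>') \<le> measure lebesgue T"
      proof (rule measure_mono_fmeasurable)
        show "(\<Union>\<D>') \<in> sets lebesgue"
          using div lmeasurable_division by auto
        have "\<Union>\<D>' \<subseteq> \<Union>\<D>"
          using \<open>\<D>' \<subseteq> \<D>\<close> by blast
        also have "... \<subseteq> T"
        proof (clarify)
          fix x D
          assume "x \<in> D" "D \<in> \<D>"
          show "x \<in> T"
            using Ksub [OF \<open>D \<in> \<D>\<close>]
            by (metis \<open>x \<in> D\<close> Int_iff dist_norm mem_ball norm_minus_commute subsetD RT)
        qed
        finally show "\<Union>\<D>' \<subseteq> T" .
        show "T \<in> lmeasurable"
          using Tm .
      qed
      have "sum (measure lebesgue) \<D>' = sum (measure lborel) \<D>'"
        using  \<open>\<D>' \<subseteq> \<D>\<close> cbox by (force intro: sum.cong)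
      then have "(2 * B * DIM('M)) ^ DIM('M) * sum (measure lebesgue) \<D>' =
                 (2 * B * real DIM('M)) ^ DIM('M) * measure lebesgue (\<Union>\<D>')"
        using content_division [OF div] by auto
      also have "\<dots> \<le> (2 * B * real DIM('M)) ^ DIM('M) * measure lebesgue T"
        using \<open>0 < B\<close> 
        by (intro mult_left_mono [OF le_meaT]) (force simp add: algebra_simps)
      also have "\<dots> \<le> E"
        using T \<open>0 < B\<close> unfolding E_def by (intro mult_left_mono) auto
      finally show ?thesis .
    qed
    finally show ?thesis .
  qed
  then have e2: "sum (measure lebesgue) \<G> \<le> E" if "\<G> \<subseteq> fbx ` \<D>" "finite \<G>" for \<G>
    by (metis finite_subset_image that)
  show ?thesis unfolding E_def[symmetric]
  proof (intro bexI conjI)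
    have "\<exists>X\<in>\<D>. f y \<in> fbx X" if "y \<in> S" for y
    proof -
      obtain X where "y \<in> X" "X \<in> \<D>"
        using \<open>S \<subseteq> \<Union>\<D>\<close> \<open>y \<in> S\<close> by auto
      then have y: "y \<in> ball(zf X) (R(zf X))"
        using uvz by fastforce
      have conj_le_eq: "z - b \<le> y \<and> y \<le> z + b \<longleftrightarrow> abs(y - z) \<le> b" for z y b::real
        by auto
      have yin: "y \<in> cbox (uf X) (vf X)" and zin: "(zf X) \<in> cbox (uf X) (vf X)"
        using uvz \<open>X \<in> \<D>\<close> \<open>y \<in> X\<close> by auto
      have "norm (y - zf X) \<le> (\<Sum>i\<in>Basis. \<bar>(y - zf X) \<bullet> i\<bar>)"
        by (rule norm_le_l1)
      also have "\<dots> \<le> real DIM('M) * prj1 (vf X - uf X)"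
      proof (rule sum_bounded_above)
        fix j::'M assume j: "j \<in> Basis"
        show "\<bar>(y - zf X) \<bullet> j\<bar> \<le> prj1 (vf X - uf X)"
          using yin zin j
          by (fastforce simp add: mem_box prj1_idem [OF \<open>X \<in> \<D>\<close> j] inner_diff_left)
      qed
      finally have nole: "norm (y - zf X) \<le> DIM('M) * prj1 (vf X - uf X)"
        by simp
      have fle: "\<bar>f y \<bullet> i - f(zf X) \<bullet> i\<bar> \<le> B * DIM('M) * prj1 (vf X - uf X)" if "i \<in> Basis" for i
      proof -
        have "\<bar>f y \<bullet> i - f (zf X) \<bullet> i\<bar> = \<bar>(f y - f (zf X)) \<bullet> i\<bar>"
          by (simp add: algebra_simps)
        also have "\<dots> \<le> norm (f y - f (zf X))"
          by (simp add: Basis_le_norm that)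
        also have "\<dots> \<le> B * norm(y - zf X)"
          by (metis uvz RB \<open>X \<in> \<D>\<close> dist_commute dist_norm mem_ball \<open>y \<in> S\<close> y)
        also have "\<dots> \<le> B * real DIM('M) * prj1 (vf X - uf X)"
          using \<open>0 < B\<close> by (simp add: nole)
        finally show ?thesis .
      qed
      have fle': "\<bar>f y \<bullet> i - f(zf X) \<bullet> i\<bar> \<le> B * DIM('M) * (vf X \<bullet> i - uf X \<bullet> i)" if "i \<in> Basis" for i
        using fle[OF that] prj1_idem[OF \<open>X \<in> \<D>\<close> that] by (simp add: inner_diff_left)
      show ?thesis
        by (rule_tac x=X in bexI)
           (auto simp: fbx_def prj1_idem mem_box conj_le_eq inner_add inner_diff fle' \<open>X \<in> \<D>\<close>)
    qed
    then show "f ` S \<subseteq> (\<Union>D\<in>\<D>. fbx D)" by auto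
  next
    have 1: "\<And>D. D \<in> \<D> \<Longrightarrow> fbx D \<in> lmeasurable"
      by (auto simp: fbx_def)
    have 2: "I' \<subseteq> \<D> \<Longrightarrow> finite I' \<Longrightarrow> measure lebesgue (\<Union>D\<in>I'. fbx D) \<le> E" for I'
      by (rule order_trans[OF measure_Union_le e2]) (auto simp: fbx_def)
    show "(\<Union>D\<in>\<D>. fbx D) \<in> lmeasurable"
      by (intro fmeasurable_UN_bound[OF \<open>countable \<D>\<close> 1 2])
    show "measure lebesgue (\<Union>D\<in>\<D>. fbx D) \<le> E"
      by (intro measure_UN_bound[OF \<open>countable \<D>\<close> 1 2])
  qed
qed

lemma lip_image_emeasure:
  fixes f :: "'M::euclidean_space \<Rightarrow> 'M"
  assumes "0 < B" "bounded S" "S \<in> sets lebesgue"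
      and lips: "\<And>x y. x \<in> S \<Longrightarrow> y \<in> S \<Longrightarrow> norm(f y - f x) \<le> B * norm(y - x)"
      and fS: "f ` S \<in> sets lebesgue"
  shows "emeasure lebesgue (f ` S) \<le> ennreal ((2 * B * DIM('M)) ^ DIM('M)) * emeasure lebesgue S"
proof -
  have Sm: "S \<in> lmeasurable"
    using assms by (simp add: bounded_set_imp_lmeasurable)
  obtain W where W: "W \<in> lmeasurable" "f ` S \<subseteq> W"
    using lip_image_measure_aux[OF assms(1-3) zero_less_one lips] by blast
  have fSm: "f ` S \<in> lmeasurable"
    using W fS fmeasurableI2 by blast
  have "measure lebesgue (f ` S) \<le> (2 * B * DIM('M)) ^ DIM('M) * measure lebesgue S"
  proof (rule field_le_epsilon)
    fix e :: real assume "0 < e"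
    define e' where "e' = e / (2 * B * DIM('M)) ^ DIM('M)"
    have pos: "0 < (2 * B * DIM('M)) ^ DIM('M)" using \<open>0 < B\<close> by simp
    have "0 < e'" unfolding e'_def using pos \<open>0 < e\<close> by simp
    obtain W where W: "W \<in> lmeasurable" "f ` S \<subseteq> W" and mW: "measure lebesgue W \<le> (2 * B * DIM('M)) ^ DIM('M) * (measure lebesgue S + e')"
      using lip_image_measure_aux[OF assms(1-3) \<open>0 < e'\<close> lips] by blast
    have "measure lebesgue (f ` S) \<le> measure lebesgue W"
      using W fS by (intro measure_mono_fmeasurable) auto
    also have "\<dots> \<le> (2 * B * DIM('M)) ^ DIM('M) * (measure lebesgue S + e')" by fact
    also have "\<dots> = (2 * B * DIM('M)) ^ DIM('M) * measure lebesgue S + e"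
      unfolding e'_def using pos \<open>0 < B\<close> by (simp add: distrib_left)
    finally show "measure lebesgue (f ` S) \<le> (2 * B * DIM('M)) ^ DIM('M) * measure lebesgue S + e" .
  qed
  then show ?thesis
    using Sm fSm \<open>0 < B\<close>
    by (simp add: emeasure_eq_measure2 ennreal_mult'[symmetric] ennreal_leI)
qed


definition invm :: "'a::euclidean_space \<Rightarrow> 'a" where
  "invm t = t /\<^sub>R (norm t ^ 2)"

lemma norm_invm: "norm (invm t) = inverse (norm t)"
  by (cases "t = 0") (simp_all add: invm_def power2_eq_square field_simps)

lemma invm_invm [simp]: "invm (invm t) = t"
  by (cases "t = 0") (simp_all add: invm_def norm_invm[unfolded invm_def] power2_eq_square field_simps)

lemma invm_vimage: "invm -` X = invm ` X"
  by (auto simp: image_iff) (metis invm_invm)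

lemma invm_measurable [measurable]: "invm \<in> borel_measurable borel"
  unfolding invm_def by measurable

lemma dist_invm:
  assumes "s \<noteq> 0" "t \<noteq> 0"
  shows "norm (invm s - invm t) = norm (s - t) / (norm s * norm t)"
proof -
  have "(norm (invm s - invm t))^2 = (norm (s - t) / (norm s * norm t))^2"
  proof -
    have a: "norm s \<noteq> 0" "norm t \<noteq> 0" using assms by auto
    have "(norm (invm s - invm t))^2 = inner (invm s - invm t) (invm s - invm t)"
      by (simp add: power2_norm_eq_inner)
    also have "\<dots> = (1/(norm s)^2)^2 * inner s s - 2 * (1/(norm s)^2) * (1/(norm t)^2) * inner s t
        + (1/(norm t)^2)^2 * inner t t"
      by (simp add: invm_def inner_diff inner_commute power2_eq_square field_simps)
    also have "\<dots> = (1/(norm s)^2)^2 * (norm s)^2 - 2 * (1/(norm s)^2) * (1/(norm t)^2) * inner s t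
        + (1/(norm t)^2)^2 * (norm t)^2"
      by (simp add: power2_norm_eq_inner)
    also have "\<dots> = ((norm s)^2 - 2 * inner s t + (norm t)^2) / ((norm s * norm t)^2)"
      using a by (simp add: field_simps power2_eq_square)
    also have "(norm s)^2 - 2 * inner s t + (norm t)^2 = (norm (s - t))^2"
      by (simp add: power2_norm_eq_inner inner_diff inner_commute)
    finally show ?thesis by (simp add: power_divide)
  qed
  then show ?thesis
    by (rule power2_eq_imp_eq) auto
qed

lemma emeasure_density_indicator_lborel:
  assumes "S \<in> sets borel" "A \<in> sets borel"
  shows "emeasure (density lborel (indicator S :: 'a::euclidean_space \<Rightarrow> ennreal)) A = emeasure lborel (S \<inter> A)"
proof -
  have "emeasure (density lborel (indicator S :: 'a \<Rightarrow> ennreal)) A = (\<integral>\<^sup>+x. indicator S x * indicator A x \<partial>lborel)"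
    using assms by (simp add: emeasure_density)
  also have "\<dots> = (\<integral>\<^sup>+x. indicator (S \<inter> A) x \<partial>lborel)"
    by (simp add: indicator_inter_arith)
  also have "\<dots> = emeasure lborel (S \<inter> A)"
    using assms by simp
  finally show ?thesis .
qed

lemma cv_le:
  fixes \<phi> :: "'a::euclidean_space \<Rightarrow> 'a" and g :: "'a \<Rightarrow> ennreal"
  assumes phi: "\<phi> \<in> borel_measurable borel" and S: "S \<in> sets borel"
    and T: "T \<in> sets borel" "bounded T" and B: "0 < B"
    and lip: "\<And>x y. x \<in> T \<Longrightarrow> y \<in> T \<Longrightarrow> norm (\<phi> y - \<phi> x) \<le> B * norm (y - x)"
    and img: "\<And>E. E \<in> sets borel \<Longrightarrow> S \<inter> \<phi> -` E = \<phi> ` (T \<inter> E)"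
    and g: "g \<in> borel_measurable borel"
  shows "(\<integral>\<^sup>+x. g (\<phi> x) * indicator S x \<partial>lborel)
          \<le> ennreal ((2*B*DIM('a))^DIM('a)) * (\<integral>\<^sup>+y. g y * indicator T y \<partial>lborel)"
proof -
  define C where "C = ennreal ((2*B*DIM('a))^DIM('a))"
  define M where "M = density lborel (indicator S :: 'a \<Rightarrow> ennreal)"
  define N where "N = density lborel (\<lambda>y. C * indicator T y)"
  have sM: "sets M = sets borel" by (simp add: M_def)
  have phiM: "\<phi> \<in> M \<rightarrow>\<^sub>M borel"
    using phi by (simp add: measurable_def sM M_def)
  have "(\<integral>\<^sup>+x. g (\<phi> x) * indicator S x \<partial>lborel) = (\<integral>\<^sup>+x. g (\<phi> x) \<partial>M)"
    unfolding M_def using S phi g by (subst nn_integral_density) (auto simp: mult.commute)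
  also have "\<dots> = (\<integral>\<^sup>+y. g y \<partial>distr M borel \<phi>)"
    by (rule nn_integral_distr[symmetric]) (use phiM g in auto)
  also have "\<dots> \<le> (\<integral>\<^sup>+y. g y \<partial>N)"
  proof (rule nn_integral_mono_measure)
    show "sets (distr M borel \<phi>) = sets N" by (simp add: M_def N_def)
    have "emeasure (distr M borel \<phi>) E \<le> emeasure N E" if E: "E \<in> sets borel" for E
    proof -
      have E': "\<phi> -` E \<in> sets borel" using phi E by (auto simp: measurable_def)
      have "emeasure (distr M borel \<phi>) E = emeasure M (\<phi> -` E)"
        using E phiM by (simp add: emeasure_distr M_def)
      also have "\<dots> = emeasure lborel (S \<inter> \<phi> -` E)"
        unfolding M_def using S E' by (rule emeasure_density_indicator_lborel)
      also have "\<dots> = emeasure lebesgue (\<phi> ` (T \<inter> E))"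
      proof -
        have "S \<inter> \<phi> -` E \<in> sets lborel" using S E' by auto
        then show ?thesis using img[OF E] by (simp add: emeasure_completion)
      qed
      also have "\<dots> \<le> C * emeasure lebesgue (T \<inter> E)"
        unfolding C_def
      proof (rule lip_image_emeasure[OF B])
        show "bounded (T \<inter> E)" using T by (auto intro: bounded_subset)
        show "T \<inter> E \<in> sets lebesgue" using T E by auto
        have "S \<inter> \<phi> -` E \<in> sets lborel" using S E' by auto
        then show "\<phi> ` (T \<inter> E) \<in> sets lebesgue" using img[OF E] by auto
      qed (use lip in auto)
      also have "\<dots> = C * emeasure lborel (T \<inter> E)"
        using T E by (simp add: emeasure_completion)
      also have "\<dots> = emeasure N E"
      proof -
        have "emeasure N E = (\<integral>\<^sup>+y. C * indicator T y * indicator E y \<partial>lborel)"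
          unfolding N_def using T E by (simp add: emeasure_density)
        also have "\<dots> = (\<integral>\<^sup>+y. C * indicator (T \<inter> E) y \<partial>lborel)"
          by (simp add: indicator_inter_arith mult.assoc)
        also have "\<dots> = C * emeasure lborel (T \<inter> E)"
          using T E by (simp add: nn_integral_cmult)
        finally show ?thesis by simp
      qed
      finally show ?thesis .
    qed
    moreover have "emeasure (distr M borel \<phi>) E = 0" "emeasure N E = 0" if "E \<notin> sets borel" for E
      using that by (auto simp: emeasure_notin_sets N_def)
    ultimately have "emeasure (distr M borel \<phi>) E \<le> emeasure N E" for E
      by (cases "E \<in> sets borel") (metis order_refl)+
    then show "distr M borel \<phi> \<le> N"
      unfolding le_measure_iff by (auto simp: N_def M_def le_fun_def)
  qed
  also have "\<dots> = (\<integral>\<^sup>+y. C * (g y * indicator T y) \<partial>lborel)"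
    unfolding N_def using T g by (subst nn_integral_density) (auto simp: mult_ac)
  also have "\<dots> = C * (\<integral>\<^sup>+y. g y * indicator T y \<partial>lborel)"
    using T g by (intro nn_integral_cmult) auto
  finally show ?thesis unfolding C_def .
qed


lemma not_pow2_le0 [simp]: "\<not> (2::real)^k \<le> 0"
  by (simp add: not_le)

definition Ai :: "nat \<Rightarrow> 'a::euclidean_space set" where
  "Ai k = {t. 1/2^(Suc k) < norm t \<and> norm t \<le> 1/2^k}"

definition Ao :: "nat \<Rightarrow> 'a::euclidean_space set" where
  "Ao k = {s. 2^k \<le> norm s \<and> norm s < 2^(Suc k)}"

definition Bc :: "'a::euclidean_space set" where
  "Bc = {t. 0 < norm t \<and> norm t \<le> 1}"

definition Uc :: "'a::euclidean_space set" where
  "Uc = {s. 1 \<le> norm s}"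

lemma Ai_borel [measurable]: "Ai k \<in> sets borel"
  unfolding Ai_def by measurable
lemma Ao_borel [measurable]: "Ao k \<in> sets borel"
  unfolding Ao_def by measurable
lemma Bc_borel [measurable]: "Bc \<in> sets borel"
  unfolding Bc_def by measurable
lemma Uc_borel [measurable]: "Uc \<in> sets borel"
  unfolding Uc_def by measurable

lemma invm_vimage_Ao: "invm -` Ao k = Ai k"
proof -
  have "(2^k \<le> inverse (norm t) \<and> inverse (norm t) < 2^(Suc k)) \<longleftrightarrow>
        (1/2^(Suc k) < norm t \<and> norm t \<le> 1/2^k)" for t :: 'a
  proof (cases "t = 0")
    case False
    then have p: "0 < norm t" by simp
    have "2^k \<le> inverse (norm t) \<longleftrightarrow> norm t \<le> 1/2^k"
      using p by (simp add: field_simps)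
    moreover have "inverse (norm t) < 2^(Suc k) \<longleftrightarrow> 1/2^(Suc k) < norm t"
      using p by (simp add: field_simps del: power_Suc)
    ultimately show ?thesis by blast
  qed simp
  then show ?thesis
    by (auto simp: Ao_def Ai_def norm_invm)
qed

lemma invm_vimage_Ai: "invm -` Ai k = Ao k"
proof -
  have "invm -` (invm -` X) = X" for X :: "'a set" by auto
  then show ?thesis by (metis invm_vimage_Ao)
qed

lemma Ai_img: "Ai k \<inter> invm -` E = invm ` (Ao k \<inter> E)"
  by (simp add: invm_vimage[symmetric] invm_vimage_Ao)

lemma Ao_img: "Ao k \<inter> invm -` E = invm ` (Ai k \<inter> E)"
  by (simp add: invm_vimage[symmetric] invm_vimage_Ai)

lemma bounded_Ai: "bounded (Ai k)"
  unfolding Ai_def bounded_iff by auto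
lemma bounded_Ao: "bounded (Ao k)"
  unfolding Ao_def bounded_iff by (auto intro: less_imp_le)

lemma lip_Ao:
  assumes "x \<in> Ao k" "y \<in> Ao k"
  shows "norm (invm y - invm x) \<le> (1/2^k)^2 * norm (y - x)"
proof -
  have xy: "2^k \<le> norm x" "2^k \<le> norm y" using assms by (auto simp: Ao_def)
  then have nz: "x \<noteq> 0" "y \<noteq> 0" by auto
  have "norm (invm y - invm x) = norm (y - x) / (norm y * norm x)"
    using nz by (simp add: dist_invm)
  also have "\<dots> \<le> norm (y - x) / (2^k * 2^k)"
  proof -
    have "0 < norm x" "0 < norm y" using nz by auto
    then show ?thesis using xy by (intro divide_left_mono mult_mono) auto
  qed
  also have "\<dots> = (1/2^k)^2 * norm (y - x)"
    by (simp add: power2_eq_square)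
  finally show ?thesis .
qed

lemma lip_Ai:
  assumes "x \<in> Ai k" "y \<in> Ai k"
  shows "norm (invm y - invm x) \<le> (2^Suc k)^2 * norm (y - x)"
proof -
  have xy: "1/2^(Suc k) < norm x" "1/2^(Suc k) < norm y" using assms by (auto simp: Ai_def)
  have p: "0 < (1::real)/2^(Suc k)" by simp
  have nz: "x \<noteq> 0" "y \<noteq> 0" using xy p by (auto simp del: power_Suc)
  have "norm (invm y - invm x) = norm (y - x) / (norm y * norm x)"
    using nz by (simp add: dist_invm)
  also have "\<dots> \<le> norm (y - x) / ((1/2^(Suc k)) * (1/2^(Suc k)))"
    using xy p by (intro divide_left_mono mult_mono mult_pos_pos) (auto simp del: power_Suc)
  also have "\<dots> = (2^Suc k)^2 * norm (y - x)"
    by (simp add: power2_eq_square del: power_Suc)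
  finally show ?thesis .
qed

lemma disjoint_Ai: "disjoint_family (Ai :: nat \<Rightarrow> 'a::euclidean_space set)"
proof -
  have "Ai m \<inter> Ai n = ({} :: 'a set)" if "m < n" for m n
  proof -
    have "(1::real)/2^n \<le> 1/2^(Suc m)"
      using that by (intro divide_left_mono power_increasing) auto
    then show ?thesis by (auto simp: Ai_def)
  qed
  then show ?thesis
    unfolding disjoint_family_on_def by (metis inf_commute linorder_neqE_nat)
qed

lemma disjoint_Ao: "disjoint_family (Ao :: nat \<Rightarrow> 'a::euclidean_space set)"
proof -
  have "Ao m \<inter> Ao n = ({} :: 'a set)" if "m < n" for m n
  proof -
    have "(2::real)^(Suc m) \<le> 2^n"
      using that by (intro power_increasing) auto
    then show ?thesis by (auto simp: Ao_def)
  qed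
  then show ?thesis
    unfolding disjoint_family_on_def by (metis inf_commute linorder_neqE_nat)
qed

lemma Union_Ao: "(\<Union>k. Ao k) = (Uc :: 'a::euclidean_space set)"
proof
  show "(\<Union>k. Ao k) \<subseteq> (Uc :: 'a set)"
  proof
    fix s :: 'a assume "s \<in> (\<Union>k. Ao k)"
    then obtain k where "2^k \<le> norm s" by (auto simp: Ao_def)
    moreover have "(1::real) \<le> 2^k" by simp
    ultimately have "1 \<le> norm s" by linarith
    then show "s \<in> Uc" by (simp add: Uc_def)
  qed
  show "Uc \<subseteq> (\<Union>k. Ao k :: 'a set)"
  proof
    fix s :: 'a assume "s \<in> Uc"
    then have s: "1 \<le> norm s" by (simp add: Uc_def)
    obtain n where "norm s < 2^n" using real_arch_pow[of 2 "norm s"] by auto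
    then obtain k where "\<not> norm s < 2^k" "norm s < 2^Suc k"
      using exists_least_lemma[of "\<lambda>n. norm s < 2^n"] s by auto
    then have "s \<in> Ao k" by (simp add: Ao_def not_less del: power_Suc)
    then show "s \<in> (\<Union>k. Ao k)" by blast
  qed
qed

lemma Union_Ai: "(\<Union>k. Ai k) = (Bc :: 'a::euclidean_space set)"
proof
  show "(\<Union>k. Ai k) \<subseteq> (Bc :: 'a set)"
  proof
    fix t :: 'a assume "t \<in> (\<Union>k. Ai k)"
    then obtain k where "1/2^(Suc k) < norm t" "norm t \<le> 1/2^k" by (auto simp: Ai_def)
    moreover have "(1::real)/2^k \<le> 1" by simp
    moreover have "(0::real) < 1/2^(Suc k)" by simp
    ultimately have "0 < norm t" "norm t \<le> 1" by linarith+
    then show "t \<in> Bc" unfolding Bc_def by simp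
  qed
  show "Bc \<subseteq> (\<Union>k. Ai k :: 'a set)"
  proof
    fix t :: 'a assume "t \<in> Bc"
    then have t: "0 < norm t" "norm t \<le> 1" by (auto simp: Bc_def)
    then have s: "1 \<le> 1 / norm t" by simp
    obtain n where "1 / norm t < 2^n" using real_arch_pow[of 2 "1 / norm t"] by auto
    then obtain k where k: "\<not> 1 / norm t < 2^k" "1 / norm t < 2^Suc k"
      using exists_least_lemma[of "\<lambda>n. 1 / norm t < 2^n"] s by auto
    have "1/2^(Suc k) < norm t" using k(2) t(1) by (simp add: field_simps del: power_Suc)
    moreover have "norm t \<le> 1/2^k" using k(1) t(1) by (simp add: field_simps)
    ultimately show "t \<in> (\<Union>k. Ai k)" by (auto simp: Ai_def simp del: power_Suc)
  qed
qed

definition wt :: "'a::euclidean_space \<Rightarrow> real" where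
  "wt t = inverse (norm t ^ (2 * DIM('a)))"

lemma wt_nonneg: "0 \<le> wt t"
  by (simp add: wt_def)

lemma wt_measurable [measurable]: "wt \<in> borel_measurable borel"
  unfolding wt_def by measurable

lemma wt_Ai_upper:
  fixes t :: "'a::euclidean_space"
  assumes "t \<in> Ai k"
  shows "wt t \<le> (2^Suc k)^(2*DIM('a))"
proof -
  have t: "1/2^(Suc k) < norm t" using assms by (simp add: Ai_def)
  have p0: "0 < (1::real)/2^(Suc k)" by simp
  have p: "0 < norm t" using t p0 by linarith
  have "inverse (norm t) \<le> 2^Suc k"
    using t p by (simp add: field_simps del: power_Suc)
  then have "(inverse (norm t))^(2*DIM('a)) \<le> (2^Suc k)^(2*DIM('a))"
    using p by (intro power_mono) auto
  then show ?thesis by (simp add: wt_def power_inverse)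
qed

lemma wt_Ai_lower:
  fixes t :: "'a::euclidean_space"
  assumes "t \<in> Ai k"
  shows "(2^k)^(2*DIM('a)) \<le> wt t"
proof -
  have t: "1/2^(Suc k) < norm t" "norm t \<le> 1/2^k" using assms by (auto simp: Ai_def)
  have p0: "0 < (1::real)/2^(Suc k)" by simp
  have p: "0 < norm t" using t p0 by linarith
  have "2^k \<le> inverse (norm t)"
    using t p by (simp add: field_simps)
  then have "(2^k)^(2*DIM('a)) \<le> (inverse (norm t))^(2*DIM('a))"
    by (intro power_mono) auto
  then show ?thesis by (simp add: wt_def power_inverse)
qed

lemma indicator_Bc_sum: "indicator Bc t = (\<Sum>k. indicator (Ai k) t :: ennreal)"
  using suminf_indicator[OF disjoint_Ai, of t] by (simp add: Union_Ai)

lemma indicator_Uc_sum: "indicator Uc t = (\<Sum>k. indicator (Ao k) t :: ennreal)"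
  using suminf_indicator[OF disjoint_Ao, of t] by (simp add: Union_Ao)

lemma const_id1: "(2^Suc k)^(2*d) * (2*(1/2^k)^2*real d)^d = (8*real d)^d"
proof -
  have "(2^Suc k)^(2*d) * (2*(1/2^k)^2*real d)^d = (((2::real)^Suc k)^2)^d * (2*(1/2^k)^2*real d)^d"
    by (simp only: power_mult)
  also have "\<dots> = (((2::real)^Suc k)^2 * (2*(1/2^k)^2*real d))^d"
    by (rule power_mult_distrib[symmetric])
  also have "((2::real)^Suc k)^2 * (2*(1/2^k)^2*real d) = 8 * real d"
    by (simp add: power2_eq_square field_simps)
  finally show ?thesis .
qed

lemma const_id2: "(2*(2^Suc k)^2*real d)^d = (8*real d)^d * (2^k)^(2*d)"
proof -
  have "(8*real d)^d * (2^k)^(2*d) = (8*real d)^d * ((2^k)^2)^d"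
    by (simp only: power_mult)
  also have "\<dots> = (8*real d * (2^k)^2)^d"
    by (rule power_mult_distrib[symmetric])
  also have "8*real d * (2^k)^2 = 2*(2^Suc k)^2*real d"
    by (simp add: power2_eq_square field_simps)
  finally show ?thesis by simp
qed

lemma cv_upper:
  fixes h :: "'a::euclidean_space \<Rightarrow> ennreal"
  assumes h: "h \<in> borel_measurable borel"
  shows "(\<integral>\<^sup>+t. h (invm t) * ennreal (wt t) * indicator Bc t \<partial>lborel)
    \<le> ennreal ((8 * DIM('a))^DIM('a)) * (\<integral>\<^sup>+s. h s * indicator Uc s \<partial>lborel)"
proof -
  define K where "K = ennreal ((8 * DIM('a))^DIM('a))"
  have step: "(\<integral>\<^sup>+t. h (invm t) * ennreal (wt t) * indicator (Ai k) t \<partial>lborel)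
      \<le> K * (\<integral>\<^sup>+s. h s * indicator (Ao k) s \<partial>lborel)" for k
  proof -
    define c where "c = ((2::real)^Suc k)^(2*DIM('a))"
    have "(\<integral>\<^sup>+t. h (invm t) * ennreal (wt t) * indicator (Ai k) t \<partial>lborel)
        \<le> (\<integral>\<^sup>+t. ennreal c * (h (invm t) * indicator (Ai k) t) \<partial>lborel)"
    proof (intro nn_integral_mono)
      fix t :: 'a
      show "h (invm t) * ennreal (wt t) * indicator (Ai k) t \<le> ennreal c * (h (invm t) * indicator (Ai k) t)"
      proof (cases "t \<in> Ai k")
        case True
        then have "ennreal (wt t) \<le> ennreal c" unfolding c_def by (intro ennreal_leI wt_Ai_upper)
        from mult_right_mono[OF this, of "h (invm t)"] show ?thesis using True by (simp add: ac_simps)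
      qed simp
    qed
    also have "\<dots> = ennreal c * (\<integral>\<^sup>+t. h (invm t) * indicator (Ai k) t \<partial>lborel)"
      using h by (intro nn_integral_cmult) auto
    also have "\<dots> \<le> ennreal c * (ennreal ((2*(1/2^k)^2*DIM('a))^DIM('a)) * (\<integral>\<^sup>+s. h s * indicator (Ao k) s \<partial>lborel))"
    proof (intro mult_left_mono cv_le)
      show "\<And>x y. x \<in> Ao k \<Longrightarrow> y \<in> Ao k \<Longrightarrow> norm (invm y - invm x) \<le> (1/2^k)^2 * norm (y - x)"
        by (rule lip_Ao)
      show "\<And>E. E \<in> sets borel \<Longrightarrow> Ai k \<inter> invm -` E = invm ` (Ao k \<inter> E)"
        by (rule Ai_img)
    qed (auto simp: h bounded_Ao)
    also have "\<dots> = K * (\<integral>\<^sup>+s. h s * indicator (Ao k) s \<partial>lborel)"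
    proof -
      have eq: "ennreal c * ennreal ((2*(1/2^k)^2*DIM('a))^DIM('a)) = K"
        unfolding K_def c_def using const_id1[of k "DIM('a)"]
        by (simp add: ennreal_mult[symmetric] del: power_Suc)
      show ?thesis by (simp add: mult.assoc[symmetric] eq)
    qed
    finally show ?thesis .
  qed
  have "(\<integral>\<^sup>+t. h (invm t) * ennreal (wt t) * indicator Bc t \<partial>lborel)
      = (\<integral>\<^sup>+t. (\<Sum>k. h (invm t) * ennreal (wt t) * indicator (Ai k) t) \<partial>lborel)"
    by (simp add: indicator_Bc_sum ennreal_suminf_cmult)
  also have "\<dots> = (\<Sum>k. \<integral>\<^sup>+t. h (invm t) * ennreal (wt t) * indicator (Ai k) t \<partial>lborel)"
    using h by (intro nn_integral_suminf) auto
  also have "\<dots> \<le> (\<Sum>k. K * (\<integral>\<^sup>+s. h s * indicator (Ao k) s \<partial>lborel))"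
    by (intro suminf_le step) auto
  also have "\<dots> = K * (\<Sum>k. \<integral>\<^sup>+s. h s * indicator (Ao k) s \<partial>lborel)"
    by (simp add: ennreal_suminf_cmult)
  also have "(\<Sum>k. \<integral>\<^sup>+s. h s * indicator (Ao k) s \<partial>lborel) = (\<integral>\<^sup>+s. (\<Sum>k. h s * indicator (Ao k) s) \<partial>lborel)"
    using h by (intro nn_integral_suminf[symmetric]) auto
  also have "\<dots> = (\<integral>\<^sup>+s. h s * indicator Uc s \<partial>lborel)"
    by (simp add: indicator_Uc_sum ennreal_suminf_cmult)
  finally show ?thesis unfolding K_def .
qed

lemma cv_lower:
  fixes h :: "'a::euclidean_space \<Rightarrow> ennreal"
  assumes h: "h \<in> borel_measurable borel"
  shows "(\<integral>\<^sup>+s. h s * indicator Uc s \<partial>lborel)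
    \<le> ennreal ((8 * DIM('a))^DIM('a)) * (\<integral>\<^sup>+t. h (invm t) * ennreal (wt t) * indicator Bc t \<partial>lborel)"
proof -
  define K where "K = ennreal ((8 * DIM('a))^DIM('a))"
  have step: "(\<integral>\<^sup>+s. h s * indicator (Ao k) s \<partial>lborel)
      \<le> K * (\<integral>\<^sup>+t. h (invm t) * ennreal (wt t) * indicator (Ai k) t \<partial>lborel)" for k
  proof -
    define c where "c = ((2::real)^k)^(2*DIM('a))"
    have "(\<integral>\<^sup>+s. h s * indicator (Ao k) s \<partial>lborel) = (\<integral>\<^sup>+s. (h \<circ> invm) (invm s) * indicator (Ao k) s \<partial>lborel)"
      by simp
    also have "\<dots> \<le> ennreal ((2*(2^Suc k)^2*real DIM('a))^DIM('a)) * (\<integral>\<^sup>+t. (h \<circ> invm) t * indicator (Ai k) t \<partial>lborel)"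
    proof (intro cv_le)
      show "\<And>x y. x \<in> Ai k \<Longrightarrow> y \<in> Ai k \<Longrightarrow> norm (invm y - invm x) \<le> (2^Suc k)^2 * norm (y - x)"
        by (rule lip_Ai)
      show "\<And>E. E \<in> sets borel \<Longrightarrow> Ao k \<inter> invm -` E = invm ` (Ai k \<inter> E)"
        by (rule Ao_img)
    qed (auto simp: h bounded_Ai intro: measurable_compose[OF invm_measurable h])
    also have "\<dots> = K * (\<integral>\<^sup>+t. ennreal c * (h (invm t) * indicator (Ai k) t) \<partial>lborel)"
    proof -
      have eq: "ennreal ((2*(2^Suc k)^2*real DIM('a))^DIM('a)) = K * ennreal c"
        unfolding K_def c_def using const_id2[of k "DIM('a)"]
        by (simp add: ennreal_mult[symmetric] del: power_Suc)
      have "(\<integral>\<^sup>+t. ennreal c * (h (invm t) * indicator (Ai k) t) \<partial>lborel)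
          = ennreal c * (\<integral>\<^sup>+t. h (invm t) * indicator (Ai k) t \<partial>lborel)"
        using h by (intro nn_integral_cmult) auto
      then show ?thesis by (simp only: eq comp_def, simp only: mult.assoc)
    qed
    also have "\<dots> \<le> K * (\<integral>\<^sup>+t. h (invm t) * ennreal (wt t) * indicator (Ai k) t \<partial>lborel)"
    proof (intro mult_left_mono nn_integral_mono)
      fix t :: 'a
      show "ennreal c * (h (invm t) * indicator (Ai k) t) \<le> h (invm t) * ennreal (wt t) * indicator (Ai k) t"
      proof (cases "t \<in> Ai k")
        case True
        then have "ennreal c \<le> ennreal (wt t)" unfolding c_def by (intro ennreal_leI wt_Ai_lower)
        from mult_right_mono[OF this, of "h (invm t)"] show ?thesis using True by (simp add: ac_simps)
      qed simp
    qed simp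
    finally show ?thesis .
  qed
  have "(\<integral>\<^sup>+s. h s * indicator Uc s \<partial>lborel) = (\<integral>\<^sup>+s. (\<Sum>k. h s * indicator (Ao k) s) \<partial>lborel)"
    by (simp add: indicator_Uc_sum ennreal_suminf_cmult)
  also have "\<dots> = (\<Sum>k. \<integral>\<^sup>+s. h s * indicator (Ao k) s \<partial>lborel)"
    using h by (intro nn_integral_suminf) auto
  also have "\<dots> \<le> (\<Sum>k. K * (\<integral>\<^sup>+t. h (invm t) * ennreal (wt t) * indicator (Ai k) t \<partial>lborel))"
    by (intro suminf_le step) auto
  also have "\<dots> = K * (\<Sum>k. \<integral>\<^sup>+t. h (invm t) * ennreal (wt t) * indicator (Ai k) t \<partial>lborel)"
    by (simp add: ennreal_suminf_cmult)
  also have "(\<Sum>k. \<integral>\<^sup>+t. h (invm t) * ennreal (wt t) * indicator (Ai k) t \<partial>lborel)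
      = (\<integral>\<^sup>+t. (\<Sum>k. h (invm t) * ennreal (wt t) * indicator (Ai k) t) \<partial>lborel)"
    using h by (intro nn_integral_suminf[symmetric]) auto
  also have "\<dots> = (\<integral>\<^sup>+t. h (invm t) * ennreal (wt t) * indicator Bc t \<partial>lborel)"
    by (simp add: indicator_Bc_sum ennreal_suminf_cmult)
  finally show ?thesis unfolding K_def .
qed


section \<open>Young function facts\<close>

lemma epos: "0 \<le> (x::real) \<Longrightarrow> 0 < exp 1 + x"
  by (intro add_pos_nonneg) auto

lemma ege1: "0 \<le> (x::real) \<Longrightarrow> 1 \<le> exp 1 + x"
  using exp_ge_add_one_self[of 1] by linarith

lemma ln_e_plus_ge1: "0 \<le> (x::real) \<Longrightarrow> 1 \<le> ln (exp 1 + x)"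
proof -
  assume x: "0 \<le> x"
  have "ln (exp 1) \<le> ln (exp 1 + x)" using x epos[of 0] epos[OF x] by (subst ln_le_cancel_iff) auto
  then show ?thesis by simp
qed

lemma ln_e_mono: "0 \<le> (x::real) \<Longrightarrow> x \<le> y \<Longrightarrow> ln (exp 1 + x) \<le> ln (exp 1 + y)"
  using epos[of x] epos[of y] by (subst ln_le_cancel_iff) auto

lemma LlogL_nonneg: "0 \<le> x \<Longrightarrow> 0 \<le> LlogL x"
  unfolding LlogL_def using ln_e_plus_ge1[of x] by simp

lemma LlogL_ge: "0 \<le> x \<Longrightarrow> x \<le> LlogL x"
  unfolding LlogL_def using ln_e_plus_ge1[of x] by (simp add: mult_le_cancel_left1)

lemma LlogL_mono: "0 \<le> x \<Longrightarrow> x \<le> y \<Longrightarrow> LlogL x \<le> LlogL y"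
  unfolding LlogL_def using ln_e_plus_ge1[of x] ln_e_mono[of x y]
  by (intro mult_mono) auto

lemma LlogL_scale: "0 \<le> (x::real) \<Longrightarrow> 1 \<le> c \<Longrightarrow> LlogL (x / c) \<le> LlogL x / c"
proof -
  assume x: "0 \<le> x" and c: "1 \<le> c"
  have "x / c \<le> x / 1" using x c by (intro divide_left_mono) auto
  then have "ln (exp 1 + x / c) \<le> ln (exp 1 + x)"
    using x c by (intro ln_e_mono) auto
  then have "x / c * ln (exp 1 + x / c) \<le> x / c * ln (exp 1 + x)"
    using x c by (intro mult_left_mono) auto
  then show ?thesis unfolding LlogL_def by simp
qed

lemma LlogL_zero [simp]: "LlogL 0 = 0"
  by (simp add: LlogL_def)

section \<open>Pointwise inequalities\<close>

lemma pw_upper: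
  fixes r G :: real and d :: nat
  assumes r: "1 \<le> r" and G: "0 \<le> G"
  shows "G * ln (exp 1 + r^(2*d) * G) \<le> LlogL G + 2 * d * (G * ln (1 + r))"
proof -
  have y: "1 \<le> r^(2*d)" using r by simp
  have "exp 1 + r^(2*d) * G \<le> (exp 1 + G) * r^(2*d)"
    using y G by (simp add: algebra_simps)
  then have "ln (exp 1 + r^(2*d) * G) \<le> ln ((exp 1 + G) * r^(2*d))"
    using y G epos[of "r^(2*d) * G"] by (subst ln_le_cancel_iff) auto
  also have "\<dots> = ln (exp 1 + G) + 2 * d * ln r"
    using y G r epos[OF G] by (simp add: ln_mult ln_realpow)
  also have "\<dots> \<le> ln (exp 1 + G) + 2 * d * ln (1 + r)"
    using r by (intro add_left_mono mult_left_mono) auto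
  finally have "G * ln (exp 1 + r^(2*d) * G) \<le> G * (ln (exp 1 + G) + 2 * d * ln (1 + r))"
    using G by (intro mult_left_mono) auto
  then show ?thesis unfolding LlogL_def by (simp add: algebra_simps)
qed

lemma pw_LlogL_le_H:
  fixes r G :: real and d :: nat
  assumes r: "1 \<le> r" and G: "0 \<le> G"
  shows "LlogL G \<le> G * ln (exp 1 + r^(2*d) * G)"
proof -
  have "G \<le> r^(2*d) * G" using r G by (simp add: mult_le_cancel_right1)
  then have "ln (exp 1 + G) \<le> ln (exp 1 + r^(2*d) * G)"
    using G by (intro ln_e_mono) auto
  then show ?thesis unfolding LlogL_def using G by (intro mult_left_mono) auto
qed

lemma pw_G_le_H:
  fixes r G :: real and d :: nat
  assumes r: "1 \<le> r" and G: "0 \<le> G"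
  shows "G \<le> G * ln (exp 1 + r^(2*d) * G)"
  using ln_e_plus_ge1[of "r^(2*d) * G"] r G by (simp add: mult_le_cancel_left1)

lemma pw_log:
  fixes r G :: real and d :: nat
  assumes r: "1 \<le> r" and G: "0 \<le> G" and d: "1 \<le> d"
  shows "G * ln r \<le> 2 * (G * ln (exp 1 + r^(2*d) * G)) + 4 * r powr (- real d - 1/4)"
proof (cases "r powr (1/2 - 2*d) \<le> G")
  case True
  have rp: "0 < r" using r by simp
  have "r powr (1/2) = r^(2*d) * r powr (1/2 - 2*d)"
    using rp by (simp add: powr_realpow[symmetric] powr_add[symmetric])
  also have "\<dots> \<le> r^(2*d) * G"
    using True by (intro mult_left_mono) auto
  finally have a: "r powr (1/2) \<le> r^(2*d) * G" .
  have pos: "0 < r powr (1/2)" using rp by simp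
  have pos2: "0 < r^(2*d) * G" using a pos by linarith
  have "(1/2) * ln r = ln (r powr (1/2))" using rp by simp
  also have "\<dots> \<le> ln (r^(2*d) * G)"
    using a pos pos2 by (subst ln_le_cancel_iff) auto
  also have "\<dots> \<le> ln (exp 1 + r^(2*d) * G)"
    using pos2 epos[of "r^(2*d) * G"] by (subst ln_le_cancel_iff) auto
  finally have "ln r \<le> 2 * ln (exp 1 + r^(2*d) * G)" by simp
  then have "G * ln r \<le> G * (2 * ln (exp 1 + r^(2*d) * G))"
    using G by (intro mult_left_mono) auto
  also have "\<dots> = 2 * (G * ln (exp 1 + r^(2*d) * G))" by simp
  finally have 1: "G * ln r \<le> 2 * (G * ln (exp 1 + r^(2*d) * G))" .
  have 2: "0 \<le> 4 * r powr (- real d - 1/4)" by simp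
  from 1 2 show ?thesis by linarith
next
  case False
  have rp: "0 < r" using r by simp
  have lnr: "0 \<le> ln r" using r by simp
  have "G * ln r \<le> r powr (1/2 - 2*d) * ln r"
    using False lnr by (intro mult_right_mono) auto
  also have "\<dots> \<le> r powr (1/2 - 2*d) * (4 * r powr (1/4))"
    using ln_powr_bound[OF r, of "1/4"] by (intro mult_left_mono) auto
  also have "\<dots> = 4 * r powr (3/4 - 2*d)"
    by (simp add: powr_add[symmetric] algebra_simps)
  also have "\<dots> \<le> 4 * r powr (- real d - 1/4)"
    using r d by (intro mult_left_mono powr_mono) auto
  finally have "G * ln r \<le> 4 * r powr (- real d - 1/4)" .
  moreover have "0 \<le> G * ln (exp 1 + r^(2*d) * G)"
    using G r ln_e_plus_ge1[of "r^(2*d) * G"] by simp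
  ultimately show ?thesis by linarith
qed

lemma ln1p_small: "0 \<le> (r::real) \<Longrightarrow> r \<le> 1 \<Longrightarrow> ln (1 + r) \<le> 1"
  using ln_add_one_self_le_self[of r] by linarith

lemma ln1p_large: "1 \<le> (r::real) \<Longrightarrow> ln (1 + r) \<le> 1 + ln r"
proof -
  assume r: "1 \<le> r"
  have "2 * r \<le> exp 1 * r"
    using r exp_ge_add_one_self[of 1] by (intro mult_right_mono) auto
  then have "1 + r \<le> exp 1 * r" using r by linarith
  then have "ln (1 + r) \<le> ln (exp 1 * r)"
    using r by (subst ln_le_cancel_iff) auto
  also have "\<dots> = 1 + ln r" using r by (simp add: ln_mult)
  finally show ?thesis .
qed

section \<open>Modular functional\<close>

lemma LlogL_borel [measurable]: "LlogL \<in> borel_measurable borel"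
  unfolding LlogL_def[abs_def] by measurable

definition Phi :: "('a::euclidean_space \<Rightarrow> real) \<Rightarrow> real \<Rightarrow> ennreal" where
  "Phi u l = (\<integral>\<^sup>+x. ennreal (LlogL (\<bar>u x\<bar> / l)) \<partial>lborel)"

lemma orlicz_norm_eq: "orlicz_norm LlogL u = Inf {ennreal l | l. l > 0 \<and> Phi u l \<le> 1}"
  unfolding orlicz_norm_def Phi_def by (simp add: nn_integral_completion)

lemma norm_le: "0 < l \<Longrightarrow> Phi u l \<le> 1 \<Longrightarrow> orlicz_norm LlogL u \<le> ennreal l"
  unfolding orlicz_norm_eq by (auto intro!: Inf_lower)

lemma Phi_mono: "0 < l \<Longrightarrow> l \<le> l' \<Longrightarrow> Phi u l' \<le> Phi u l"
  unfolding Phi_def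
  by (intro nn_integral_mono ennreal_leI LlogL_mono divide_left_mono) auto

lemma Phi_scale:
  assumes u: "u \<in> borel_measurable borel" and l: "0 < l" and c: "1 \<le> c"
  shows "Phi u (c * l) \<le> ennreal (1 / c) * Phi u l"
proof -
  have "Phi u (c * l) \<le> (\<integral>\<^sup>+x. ennreal (1 / c) * ennreal (LlogL (\<bar>u x\<bar> / l)) \<partial>lborel)"
    unfolding Phi_def
  proof (intro nn_integral_mono)
    fix x
    have "LlogL (\<bar>u x\<bar> / (c * l)) = LlogL ((\<bar>u x\<bar> / l) / c)" by (simp add: field_simps)
    also have "\<dots> \<le> LlogL (\<bar>u x\<bar> / l) / c"
      using l c by (intro LlogL_scale) auto
    finally show "ennreal (LlogL (\<bar>u x\<bar> / (c * l))) \<le> ennreal (1 / c) * ennreal (LlogL (\<bar>u x\<bar> / l))"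
      using l c by (simp add: ennreal_mult[symmetric] LlogL_nonneg ennreal_leI)
  qed
  also have "\<dots> = ennreal (1 / c) * Phi u l"
    unfolding Phi_def using u by (intro nn_integral_cmult) auto
  finally show ?thesis .
qed

lemma Phi_scale_le:
  assumes u: "u \<in> borel_measurable borel" and l: "0 < l" and c: "1 \<le> c" and P: "Phi u l \<le> 1"
    and l': "c * l \<le> l'"
  shows "Phi u l' \<le> ennreal (1 / c)"
proof -
  have "Phi u l' \<le> Phi u (c * l)"
    using l c l' by (intro Phi_mono) auto
  also have "\<dots> \<le> ennreal (1 / c) * Phi u l"
    by (rule Phi_scale[OF u l c])
  also have "\<dots> \<le> ennreal (1 / c) * 1"
    by (intro mult_left_mono P) auto
  finally show ?thesis by simp
qed

lemma L1_le:
  assumes u: "u \<in> borel_measurable borel" and l: "0 < l" and P: "Phi u l \<le> 1"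
  shows "(\<integral>\<^sup>+x. ennreal \<bar>u x\<bar> \<partial>lborel) \<le> ennreal l"
proof -
  have "(\<integral>\<^sup>+x. ennreal \<bar>u x\<bar> \<partial>lborel) \<le> (\<integral>\<^sup>+x. ennreal l * ennreal (LlogL (\<bar>u x\<bar> / l)) \<partial>lborel)"
  proof (intro nn_integral_mono)
    fix x
    have "\<bar>u x\<bar> = l * (\<bar>u x\<bar> / l)" using l by simp
    also have "\<dots> \<le> l * LlogL (\<bar>u x\<bar> / l)"
      using l by (intro mult_left_mono LlogL_ge) auto
    finally show "ennreal \<bar>u x\<bar> \<le> ennreal l * ennreal (LlogL (\<bar>u x\<bar> / l))"
      using l by (simp add: ennreal_mult[symmetric] LlogL_nonneg ennreal_leI)
  qed
  also have "\<dots> = ennreal l * Phi u l"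
    unfolding Phi_def using u by (intro nn_integral_cmult) auto
  also have "\<dots> \<le> ennreal l * 1"
    by (intro mult_left_mono P) auto
  finally show ?thesis by simp
qed

lemma le_Inf_sum:
  fixes X :: ennreal
  assumes c: "0 < c" and H: "\<And>a b. a \<in> A \<Longrightarrow> b \<in> B \<Longrightarrow> X \<le> ennreal c * (a + b)"
  shows "X \<le> ennreal c * (Inf A + Inf B)"
proof (cases "Inf A = top \<or> Inf B = top")
  case True
  then have "Inf A + Inf B = top" by (metis ennreal_add_eq_top)
  then have "ennreal c * (Inf A + Inf B) = top"
    using c by (simp only: ennreal_mult_top ennreal_eq_0_iff not_le) (simp add: not_le)
  then show ?thesis by (simp only: top_greatest)
next
  case False
  then have fin: "Inf A < top" "Inf B < top" using top.not_eq_extremum by blast+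
  show ?thesis
  proof (rule ennreal_le_epsilon)
    fix e :: real assume "0 < e"
    define e' where "e' = e / (2 * c)"
    have e': "0 < e'" using \<open>0 < e\<close> c by (simp add: e'_def)
    have lem: "x < x + ennreal e'" if "x < top" for x :: ennreal
      using that e' by (cases x rule: ennreal_cases) (auto simp: ennreal_plus[symmetric] ennreal_less_iff simp del: ennreal_plus)
    have "Inf A < Inf A + ennreal e'" by (rule lem[OF fin(1)])
    then obtain a where a: "a \<in> A" "a < Inf A + ennreal e'" by (auto simp: Inf_less_iff)
    have "Inf B < Inf B + ennreal e'" by (rule lem[OF fin(2)])
    then obtain b where b: "b \<in> B" "b < Inf B + ennreal e'" by (auto simp: Inf_less_iff)
    have "X \<le> ennreal c * (a + b)" using H a b by blast
    also have "\<dots> \<le> ennreal c * ((Inf A + ennreal e') + (Inf B + ennreal e'))"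
      using a b by (intro mult_left_mono add_mono) auto
    also have "\<dots> = ennreal c * (Inf A + Inf B) + ennreal c * ennreal (2 * e')"
      using e' by (simp add: distrib_left ennreal_plus[symmetric] ac_simps)
    also have "ennreal c * ennreal (2 * e') = ennreal e"
      using c e' by (simp add: ennreal_mult[symmetric] e'_def)
    finally show "X \<le> ennreal c * (Inf A + Inf B) + ennreal e" .
  qed
qed

lemma Inf_ennreal_above: "Inf {ennreal a | a. 0 < a \<and> L \<le> ennreal a} = (L :: ennreal)"
proof (rule antisym)
  show "L \<le> Inf {ennreal a | a. 0 < a \<and> L \<le> ennreal a}"
    by (auto intro!: Inf_greatest)
  show "Inf {ennreal a | a. 0 < a \<and> L \<le> ennreal a} \<le> L"
  proof (cases "L = top")
    case False
    then obtain r where r: "L = ennreal r" "0 \<le> r" by (cases L rule: ennreal_cases) auto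
    show ?thesis
    proof (rule ennreal_le_epsilon)
      fix e :: real assume "0 < e"
      then have "ennreal (r + e) \<in> {ennreal a | a. 0 < a \<and> L \<le> ennreal a}"
        using r by (auto intro!: exI[of _ "r + e"] ennreal_leI)
      then have "Inf {ennreal a | a. 0 < a \<and> L \<le> ennreal a} \<le> ennreal (r + e)"
        by (rule Inf_lower)
      then show "Inf {ennreal a | a. 0 < a \<and> L \<le> ennreal a} \<le> L + ennreal e"
        using r \<open>0 < e\<close> by (simp add: ennreal_plus)
    qed
  qed simp
qed

section \<open>A radial integral\<close>

lemma q_facts: "0 < (2::real) powr (-1/4)" "(2::real) powr (-1/4) < 1"
proof -
  show "0 < (2::real) powr (-1/4)" by simp
  have "(2::real) powr (-1/4) < 2 powr 0"
    by (subst powr_less_cancel_iff) auto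
  then show "(2::real) powr (-1/4) < 1" by simp
qed

lemma shell_const:
  fixes V :: real and d k :: nat
  shows "(2^k) powr (- real d - 1/4) * (V * (2^Suc k)^d) = V * 2^d * (2 powr (-1/4))^k"
proof -
  have a: "((2::real)^k) powr (- real d - 1/4) = 2 powr (real k * (- real d - 1/4))"
    by (simp add: powr_realpow[symmetric] powr_powr del: powr_realpow)
  have b: "((2::real)^Suc k)^d = 2 powr (real (Suc k) * real d)"
  proof -
    have "((2::real)^Suc k)^d = 2^(Suc k * d)" by (simp only: power_mult)
    also have "\<dots> = 2 powr (real (Suc k * d))" by (rule powr_realpow[symmetric]) simp
    finally show ?thesis by (simp only: of_nat_mult)
  qed
  have c: "((2::real) powr (-1/4))^k = 2 powr (real k * (-1/4))"
    by (subst powr_realpow[symmetric]) (simp_all add: powr_powr mult.commute)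
  have e: "(2::real)^d = 2 powr (real d)" by (simp add: powr_realpow)
  show ?thesis
    unfolding a b c e
    by (simp add: powr_add[symmetric] algebra_simps)
qed

lemma Psi_bound:
  "(\<integral>\<^sup>+s. ennreal (norm (s::'a::euclidean_space) powr (- real DIM('a) - 1/4)) * indicator Uc s \<partial>lborel)
    \<le> ennreal (unit_ball_vol (real DIM('a)) * 2^DIM('a) / (1 - 2 powr (-1/4)))"
proof -
  define d where "d = DIM('a)"
  define V where "V = unit_ball_vol (real DIM('a))"
  define q :: real where "q = 2 powr (-1/4)"
  have q: "0 < q" "q < 1" using q_facts by (auto simp: q_def)
  have V: "0 \<le> V" by (simp add: V_def)
  let ?psi = "\<lambda>s::'a. ennreal (norm s powr (- real DIM('a) - 1/4))"
  have step: "(\<integral>\<^sup>+s. ?psi s * indicator (Ao k) s \<partial>lborel) \<le> ennreal (V * 2^d * q^k)" for k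
  proof -
    define c :: real where "c = (2^k) powr (- real d - 1/4)"
    have "(\<integral>\<^sup>+s. ?psi s * indicator (Ao k) s \<partial>lborel)
        \<le> (\<integral>\<^sup>+s. ennreal c * indicator (cball (0::'a) (2^Suc k)) s \<partial>lborel)"
    proof (intro nn_integral_mono)
      fix s :: 'a
      show "?psi s * indicator (Ao k) s \<le> ennreal c * indicator (cball 0 (2^Suc k)) s"
      proof (cases "s \<in> Ao k")
        case True
        then have s: "2^k \<le> norm s" "norm s < 2^Suc k" by (auto simp: Ao_def)
        have "norm s powr (- real DIM('a) - 1/4) \<le> (2^k) powr (- real d - 1/4)"
          using s unfolding d_def by (intro powr_mono2') auto
        moreover have "s \<in> cball 0 (2^Suc k)" using s by (auto simp: dist_norm simp del: power_Suc)
        ultimately show ?thesis using True by (auto simp: c_def intro: ennreal_leI)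
      qed simp
    qed
    also have "\<dots> = ennreal c * emeasure lborel (cball (0::'a) (2^Suc k))"
      by (intro nn_integral_cmult_indicator) auto
    also have "\<dots> = ennreal (c * (V * (2^Suc k)^d))"
      by (simp add: emeasure_cball V_def d_def c_def ennreal_mult[symmetric] del: power_Suc)
    also have "c * (V * (2^Suc k)^d) = V * 2^d * q^k"
      unfolding c_def q_def by (rule shell_const)
    finally show ?thesis .
  qed
  have "(\<integral>\<^sup>+s. ?psi s * indicator Uc s \<partial>lborel) = (\<integral>\<^sup>+s. (\<Sum>k. ?psi s * indicator (Ao k) s) \<partial>lborel)"
    by (simp add: indicator_Uc_sum)
  also have "\<dots> = (\<Sum>k. \<integral>\<^sup>+s. ?psi s * indicator (Ao k) s \<partial>lborel)"
    by (intro nn_integral_suminf) auto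
  also have "\<dots> \<le> (\<Sum>k. ennreal (V * 2^d * q^k))"
    by (intro suminf_le step) auto
  also have "\<dots> = ennreal (\<Sum>k. V * 2^d * q^k)"
    using q V by (intro suminf_ennreal2 summable_mult summable_geometric) auto
  also have "(\<Sum>k. V * 2^d * q^k) = V * 2^d / (1 - q)"
    using q by (simp add: suminf_mult suminf_geometric summable_geometric divide_inverse)
  finally show ?thesis by (simp add: V_def d_def q_def)
qed


definition Hf :: "('a::euclidean_space \<Rightarrow> real) \<Rightarrow> real \<Rightarrow> 'a \<Rightarrow> real" where
  "Hf f l s = \<bar>f s\<bar> / l * ln (exp 1 + norm s ^ (2 * DIM('a)) * (\<bar>f s\<bar> / l))"

definition J :: "('a::euclidean_space \<Rightarrow> real) \<Rightarrow> real \<Rightarrow> ennreal" where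
  "J f l = (\<integral>\<^sup>+s. ennreal (Hf f l s) * indicator Uc s \<partial>lborel)"

definition VB :: "('a::euclidean_space \<Rightarrow> real) \<Rightarrow> 'a \<Rightarrow> real" where
  "VB f x = Vop f x * indicator (ball 0 1) x"

definition FB :: "('a::euclidean_space \<Rightarrow> real) \<Rightarrow> 'a \<Rightarrow> real" where
  "FB f x = f x * indicator (ball 0 1) x"

definition LL :: "('a::euclidean_space \<Rightarrow> real) \<Rightarrow> ennreal" where
  "LL f = (\<integral>\<^sup>+s. ennreal (\<bar>f s\<bar> * ln (1 + norm s)) \<partial>lborel)"

lemma Vop_eq: "Vop f t = wt t * f (invm t)"
  by (simp add: Vop_def wt_def invm_def)

lemma norm_invm_pow: "norm (invm t) ^ (2 * DIM('a)) = wt (t::'a::euclidean_space)"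
  by (simp add: norm_invm wt_def power_inverse)

lemma Hf_nonneg: "0 < l \<Longrightarrow> 0 \<le> Hf f l s"
  unfolding Hf_def using ln_e_plus_ge1[of "norm s ^ (2 * DIM('a)) * (\<bar>f s\<bar> / l)"] by simp

lemma ball_borel [measurable]: "ball (0::'a::euclidean_space) 1 \<in> sets borel"
  by simp

lemma Hf_measurable [measurable]:
  assumes [measurable]: "f \<in> borel_measurable borel" shows "Hf f l \<in> borel_measurable borel"
  unfolding Hf_def[abs_def] by measurable

lemma Vop_measurable [measurable]:
  assumes [measurable]: "f \<in> borel_measurable borel" shows "Vop f \<in> borel_measurable borel"
proof -
  have "Vop f = (\<lambda>t. wt t * f (invm t))" by (simp add: Vop_eq[abs_def])
  also have "\<dots> \<in> borel_measurable borel" by measurable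
  finally show ?thesis .
qed

lemma VB_measurable [measurable]:
  assumes [measurable]: "f \<in> borel_measurable borel" shows "VB f \<in> borel_measurable borel"
  unfolding VB_def[abs_def] by measurable

lemma FB_measurable [measurable]:
  assumes [measurable]: "f \<in> borel_measurable borel" shows "FB f \<in> borel_measurable borel"
  unfolding FB_def[abs_def] by measurable

lemma pw_V:
  fixes t :: "'a::euclidean_space"
  assumes "0 < l" "t \<noteq> 0"
  shows "LlogL (\<bar>Vop f t\<bar> / l) = Hf f l (invm t) * wt t"
proof -
  have "\<bar>Vop f t\<bar> = wt t * \<bar>f (invm t)\<bar>"
    by (simp add: Vop_eq abs_mult wt_nonneg)
  then show ?thesis
    unfolding LlogL_def Hf_def norm_invm_pow by (simp add: ac_simps)
qed

lemma sphere_null: "sphere (0::'a::euclidean_space) 1 \<in> null_sets lborel"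
  using negligible_sphere[of "0::'a" 1]
  by (auto simp: null_sets_completion_iff negligible_iff_null_sets negligible_convex_frontier)

abbreviation Kc :: "'a::euclidean_space itself \<Rightarrow> real" where
  "Kc _ \<equiv> real ((8 * DIM('a)) ^ DIM('a))"

lemma Kc_ge1: "1 \<le> Kc TYPE('a::euclidean_space)"
proof -
  have "(1::nat) \<le> (8 * DIM('a)) ^ DIM('a)"
    using DIM_positive[where 'a='a] by (simp add: Suc_le_eq)
  then show ?thesis by linarith
qed

lemma P_le_J:
  fixes f :: "'a::euclidean_space \<Rightarrow> real"
  assumes f [measurable]: "f \<in> borel_measurable borel" and l: "0 < l"
  shows "Phi (VB f) l \<le> ennreal (Kc TYPE('a)) * J f l"
proof -
  have "Phi (VB f) l \<le> (\<integral>\<^sup>+t. ennreal (Hf f l (invm t)) * ennreal (wt t) * indicator Bc t \<partial>lborel)"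
    unfolding Phi_def
  proof (intro nn_integral_mono)
    fix t :: 'a
    show "ennreal (LlogL (\<bar>VB f t\<bar> / l)) \<le> ennreal (Hf f l (invm t)) * ennreal (wt t) * indicator Bc t"
    proof (cases "t \<in> ball 0 1 \<and> t \<noteq> 0")
      case True
      then have "t \<in> Bc" by (auto simp: Bc_def)
      then show ?thesis using True l
        by (simp add: VB_def pw_V ennreal_mult Hf_nonneg wt_nonneg)
    next
      case False
      then have "VB f t = 0" by (auto simp: VB_def Vop_def)
      then show ?thesis by simp
    qed
  qed
  also have "\<dots> \<le> ennreal (Kc TYPE('a)) * J f l"
    unfolding J_def by (rule cv_upper) measurable
  finally show ?thesis .
qed

lemma J_le_P:
  fixes f :: "'a::euclidean_space \<Rightarrow> real"
  assumes f [measurable]: "f \<in> borel_measurable borel" and l: "0 < l"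
  shows "J f l \<le> ennreal (Kc TYPE('a)) * Phi (VB f) l"
proof -
  have "J f l \<le> ennreal (Kc TYPE('a)) * (\<integral>\<^sup>+t. ennreal (Hf f l (invm t)) * ennreal (wt t) * indicator Bc t \<partial>lborel)"
    unfolding J_def by (rule cv_lower) measurable
  also have "(\<integral>\<^sup>+t. ennreal (Hf f l (invm t)) * ennreal (wt t) * indicator Bc t \<partial>lborel) \<le> Phi (VB f) l"
    unfolding Phi_def
  proof (intro nn_integral_mono_AE)
    show "AE t in lborel. ennreal (Hf f l (invm t)) * ennreal (wt t) * indicator Bc t \<le> ennreal (LlogL (\<bar>VB f t\<bar> / l))"
      using AE_not_in[OF sphere_null]
    proof eventually_elim
      case (elim t)
      show ?case
      proof (cases "t \<in> Bc")
        case True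
        then have "t \<in> ball 0 1" "t \<noteq> 0" using elim by (auto simp: Bc_def)
        then show ?thesis using True l
          by (simp add: VB_def pw_V ennreal_mult Hf_nonneg wt_nonneg)
      qed simp
    qed
  qed
  then have "ennreal (Kc TYPE('a)) * (\<integral>\<^sup>+t. ennreal (Hf f l (invm t)) * ennreal (wt t) * indicator Bc t \<partial>lborel)
      \<le> ennreal (Kc TYPE('a)) * Phi (VB f) l"
    by (rule mult_left_mono) simp
  finally show ?thesis .
qed

lemma ennreal_add_mult_le:
  assumes "0 \<le> a" "0 \<le> b" "0 \<le> c" "a + b * c \<le> r"
  shows "ennreal a + ennreal b * ennreal c \<le> ennreal r"
  using assms by (simp add: ennreal_mult[symmetric] ennreal_plus[symmetric] ennreal_leI del: ennreal_plus)

lemma upper_N2: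
  fixes f :: "'a::euclidean_space \<Rightarrow> real"
  assumes f [measurable]: "f \<in> borel_measurable borel" and l1: "0 < l1" and P1: "Phi f l1 \<le> 1"
    and a: "0 < a" and La: "LL f \<le> ennreal a"
  shows "orlicz_norm LlogL (VB f) \<le> ennreal (Kc TYPE('a) * (1 + 2 * real DIM('a)) * (l1 + a))"
proof -
  define K where "K = Kc TYPE('a)"
  define D where "D = 2 * real DIM('a)"
  define \<beta> where "\<beta> = K * (1 + D)"
  define lam where "lam = \<beta> * (l1 + a)"
  have K1: "1 \<le> K" unfolding K_def by (rule Kc_ge1)
  have D0: "0 \<le> D" by (simp add: D_def)
  have "K * 1 \<le> K * (1 + D)" using K1 D0 by (intro mult_left_mono) auto
  then have "K \<le> \<beta>" by (simp add: \<beta>_def)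
  then have b1: "1 \<le> \<beta>" using K1 by linarith
  have lam: "0 < lam" using b1 l1 a by (simp add: lam_def)
  have "J f lam \<le> (\<integral>\<^sup>+s. ennreal (LlogL (\<bar>f s\<bar> / lam)) + ennreal (D / lam) * ennreal (\<bar>f s\<bar> * ln (1 + norm s)) \<partial>lborel)"
    unfolding J_def
  proof (intro nn_integral_mono)
    fix s :: 'a
    show "ennreal (Hf f lam s) * indicator Uc s \<le> ennreal (LlogL (\<bar>f s\<bar> / lam)) + ennreal (D / lam) * ennreal (\<bar>f s\<bar> * ln (1 + norm s))"
    proof (cases "s \<in> Uc")
      case True
      then have r: "1 \<le> norm s" by (simp add: Uc_def)
      have G: "0 \<le> \<bar>f s\<bar> / lam" using lam by simp
      have "Hf f lam s \<le> LlogL (\<bar>f s\<bar> / lam) + real (2 * DIM('a)) * (\<bar>f s\<bar> / lam * ln (1 + norm s))"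
        unfolding Hf_def by (rule pw_upper[OF r G])
      also have "\<dots> = LlogL (\<bar>f s\<bar> / lam) + D / lam * (\<bar>f s\<bar> * ln (1 + norm s))"
        by (simp add: D_def)
      finally have "Hf f lam s \<le> LlogL (\<bar>f s\<bar> / lam) + D / lam * (\<bar>f s\<bar> * ln (1 + norm s))" .
      moreover have "ennreal (LlogL (\<bar>f s\<bar> / lam)) + ennreal (D / lam) * ennreal (\<bar>f s\<bar> * ln (1 + norm s))
          \<ge> ennreal (LlogL (\<bar>f s\<bar> / lam) + D / lam * (\<bar>f s\<bar> * ln (1 + norm s)))"
        using G lam D0 r by (simp add: ennreal_mult[symmetric] ennreal_plus[symmetric] LlogL_nonneg del: ennreal_plus)
      ultimately show ?thesis using True
        by (simp del: ennreal_plus) (meson ennreal_leI order_trans)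
    qed simp
  qed
  also have "\<dots> = Phi f lam + ennreal (D / lam) * LL f"
    unfolding Phi_def LL_def by (subst nn_integral_add) (auto simp: nn_integral_cmult)
  also have "\<dots> \<le> ennreal (1/\<beta>) + ennreal (D / lam) * ennreal a"
  proof (intro add_mono mult_left_mono La)
    show "Phi f lam \<le> ennreal (1 / \<beta>)"
      using l1 b1 a by (intro Phi_scale_le[OF f l1 b1 P1]) (auto simp: lam_def)
  qed auto
  also have "\<dots> \<le> ennreal ((1 + D) / \<beta>)"
  proof (intro ennreal_add_mult_le)
    have e: "a / lam = (a / (l1 + a)) / \<beta>" by (simp add: lam_def)
    have "a / (l1 + a) \<le> 1" using l1 a by simp
    then have "a / lam \<le> 1 / \<beta>" unfolding e using b1 by (intro divide_right_mono) auto
    then have "D * (a / lam) \<le> D * (1 / \<beta>)" using D0 by (intro mult_left_mono) auto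
    then have "D / lam * a \<le> D / \<beta>" by simp
    then show "1 / \<beta> + D / lam * a \<le> (1 + D) / \<beta>" by (simp add: add_divide_distrib)
  qed (use lam D0 b1 a in auto)
  finally have J: "J f lam \<le> ennreal ((1 + D) / \<beta>)" .
  have "Phi (VB f) lam \<le> ennreal K * J f lam"
    unfolding K_def by (rule P_le_J[OF f lam])
  also have "\<dots> \<le> ennreal K * ennreal ((1 + D) / \<beta>)"
    by (intro mult_left_mono J) auto
  also have "\<dots> = 1"
    using K1 D0 by (simp add: ennreal_mult[symmetric] \<beta>_def)
  finally have "Phi (VB f) lam \<le> 1" .
  then have "orlicz_norm LlogL (VB f) \<le> ennreal lam"
    by (rule norm_le[OF lam])
  then show ?thesis by (simp add: lam_def \<beta>_def K_def D_def)
qed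

abbreviation Psic :: "'a::euclidean_space itself \<Rightarrow> real" where
  "Psic _ \<equiv> unit_ball_vol (real DIM('a)) * 2^DIM('a) / (1 - 2 powr (-1/4))"

lemma Psic_nonneg: "0 \<le> Psic TYPE('a::euclidean_space)"
  using q_facts by simp

lemma pw_lower_log:
  fixes r F l2 :: real and d :: nat
  assumes r: "1 \<le> r" and F: "0 \<le> F" and l2: "0 < l2" and d: "1 \<le> d"
  shows "F * ln (1 + r) \<le> 3 * l2 * (F / l2 * ln (exp 1 + r^(2*d) * (F / l2))) + 4 * l2 * r powr (- real d - 1/4)"
proof -
  define G where "G = F / l2"
  have G: "0 \<le> G" using F l2 by (simp add: G_def)
  have F_eq: "F = l2 * G" using l2 by (simp add: G_def)
  define H where "H = G * ln (exp 1 + r^(2*d) * G)"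
  have "F * ln (1 + r) \<le> F * (1 + ln r)"
    using F ln1p_large[OF r] by (intro mult_left_mono) auto
  also have "\<dots> = l2 * G + l2 * (G * ln r)" by (simp add: F_eq algebra_simps)
  also have "\<dots> \<le> l2 * H + l2 * (2 * H + 4 * r powr (- real d - 1/4))"
    unfolding H_def using pw_G_le_H[OF r G, of d] pw_log[OF r G d] l2
    by (intro add_mono mult_left_mono) auto
  also have "\<dots> = 3 * l2 * H + 4 * l2 * r powr (- real d - 1/4)" by (simp add: algebra_simps)
  finally show ?thesis by (simp add: H_def G_def)
qed

lemma lower_bound:
  fixes f :: "'a::euclidean_space \<Rightarrow> real"
  assumes f [measurable]: "f \<in> borel_measurable borel" and l1: "0 < l1" and P1: "Phi (FB f) l1 \<le> 1"
    and l2: "0 < l2" and P2: "Phi (VB f) l2 \<le> 1"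
  shows "orlicz_norm LlogL f + LL f \<le> ennreal ((5 * Kc TYPE('a) + 1 + 4 * Psic TYPE('a)) * (l1 + l2))"
proof -
  define K where "K = Kc TYPE('a)"
  define Ps where "Ps = Psic TYPE('a)"
  define d where "d = DIM('a)"
  have K1: "1 \<le> K" unfolding K_def by (rule Kc_ge1)
  have Ps0: "0 \<le> Ps" unfolding Ps_def by (rule Psic_nonneg)
  have d1: "1 \<le> d" unfolding d_def using DIM_positive[where 'a='a] by linarith
  define lam where "lam = 2 * K * (l1 + l2)"
  have lam: "0 < lam" using K1 l1 l2 by (simp add: lam_def)
  have c1: "1 \<le> 2 * K" using K1 by simp
  have "Phi f lam \<le> (\<integral>\<^sup>+s. ennreal (LlogL (\<bar>FB f s\<bar> / lam)) + ennreal (Hf f lam s) * indicator Uc s \<partial>lborel)"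
    unfolding Phi_def
  proof (intro nn_integral_mono)
    fix s :: 'a
    show "ennreal (LlogL (\<bar>f s\<bar> / lam)) \<le> ennreal (LlogL (\<bar>FB f s\<bar> / lam)) + ennreal (Hf f lam s) * indicator Uc s"
    proof (cases "s \<in> ball 0 1")
      case True
      then show ?thesis by (simp add: FB_def)
    next
      case False
      then have r: "1 \<le> norm s" and sU: "s \<in> Uc" by (auto simp: Uc_def dist_norm)
      have "LlogL (\<bar>f s\<bar> / lam) \<le> Hf f lam s"
        unfolding Hf_def using lam by (intro pw_LlogL_le_H[OF r]) auto
      then have "ennreal (LlogL (\<bar>f s\<bar> / lam)) \<le> ennreal (Hf f lam s)" by (rule ennreal_leI)
      then show ?thesis using sU by (simp add: add_increasing)
    qed
  qed
  also have "\<dots> = Phi (FB f) lam + J f lam"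
    unfolding Phi_def J_def by (subst nn_integral_add) auto
  also have "\<dots> \<le> ennreal (1 / (2 * K)) + ennreal (1 / 2)"
  proof (intro add_mono)
    show "Phi (FB f) lam \<le> ennreal (1 / (2 * K))"
      using l1 l2 K1 by (intro Phi_scale_le[OF FB_measurable[OF f] l1 c1 P1]) (auto simp: lam_def)
    have "J f lam \<le> ennreal K * Phi (VB f) lam"
      unfolding K_def by (rule J_le_P[OF f lam])
    also have "\<dots> \<le> ennreal K * ennreal (1 / (2 * K))"
      using l1 l2 K1
      by (intro mult_left_mono Phi_scale_le[OF VB_measurable[OF f] l2 c1 P2]) (auto simp: lam_def)
    also have "\<dots> = ennreal (1 / 2)"
      using K1 by (simp add: ennreal_mult[symmetric])
    finally show "J f lam \<le> ennreal (1 / 2)" .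
  qed
  also have "\<dots> \<le> 1"
  proof -
    have "1 / (2 * K) \<le> 1 / 2" using K1 by (simp add: field_simps)
    then have "1 / (2 * K) + 1 / 2 \<le> 1" by linarith
    then have "ennreal (1 / (2 * K) + 1 / 2) \<le> ennreal 1" by (rule ennreal_leI)
    moreover have "ennreal (1 / (2 * K)) + ennreal (1 / 2) = ennreal (1 / (2 * K) + 1 / 2)"
      using K1 by (intro ennreal_plus[symmetric]) auto
    ultimately show ?thesis by (metis ennreal_1)
  qed
  finally have N: "orlicz_norm LlogL f \<le> ennreal lam"
    by (rule norm_le[OF lam])
  let ?psi = "\<lambda>s::'a. ennreal (norm s powr (- real DIM('a) - 1/4))"
  have "LL f \<le> (\<integral>\<^sup>+s. ennreal \<bar>FB f s\<bar> + (ennreal (3 * l2) * (ennreal (Hf f l2 s) * indicator Uc s)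
        + ennreal (4 * l2) * (?psi s * indicator Uc s)) \<partial>lborel)"
    unfolding LL_def
  proof (intro nn_integral_mono)
    fix s :: 'a
    show "ennreal (\<bar>f s\<bar> * ln (1 + norm s)) \<le> ennreal \<bar>FB f s\<bar> + (ennreal (3 * l2) * (ennreal (Hf f l2 s) * indicator Uc s)
        + ennreal (4 * l2) * (?psi s * indicator Uc s))"
    proof (cases "s \<in> ball 0 1")
      case True
      then have "norm s \<le> 1" by (simp add: dist_norm)
      then have "\<bar>f s\<bar> * ln (1 + norm s) \<le> \<bar>f s\<bar> * 1"
        using ln1p_small[of "norm s"] by (intro mult_left_mono) auto
      then have "ennreal (\<bar>f s\<bar> * ln (1 + norm s)) \<le> ennreal \<bar>FB f s\<bar>"
        using True by (simp add: FB_def ennreal_leI)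
      then show ?thesis by (rule order_trans) simp
    next
      case False
      then have r: "1 \<le> norm s" and sU: "s \<in> Uc" by (auto simp: Uc_def dist_norm)
      have "\<bar>f s\<bar> * ln (1 + norm s) \<le> 3 * l2 * Hf f l2 s + 4 * l2 * norm s powr (- real DIM('a) - 1/4)"
        unfolding Hf_def using pw_lower_log[OF r _ l2, of "\<bar>f s\<bar>" "DIM('a)"] d1 by (auto simp: d_def)
      then have "ennreal (\<bar>f s\<bar> * ln (1 + norm s)) \<le> ennreal (3 * l2 * Hf f l2 s + 4 * l2 * norm s powr (- real DIM('a) - 1/4))"
        by (rule ennreal_leI)
      also have "\<dots> = ennreal (3 * l2) * ennreal (Hf f l2 s) + ennreal (4 * l2) * ?psi s"
        using l2 Hf_nonneg[OF l2, of f s]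
        by (simp add: ennreal_mult[symmetric] ennreal_plus[symmetric] del: ennreal_plus)
      finally show ?thesis using sU False by (simp add: FB_def)
    qed
  qed
  also have "\<dots> = (\<integral>\<^sup>+s. ennreal \<bar>FB f s\<bar> \<partial>lborel) + (ennreal (3 * l2) * J f l2
        + ennreal (4 * l2) * (\<integral>\<^sup>+s. ?psi s * indicator Uc s \<partial>lborel))"
    unfolding J_def by (simp add: nn_integral_add nn_integral_cmult)
  also have "\<dots> \<le> ennreal l1 + (ennreal (3 * l2) * ennreal K + ennreal (4 * l2) * ennreal Ps)"
  proof (intro add_mono mult_left_mono)
    show "(\<integral>\<^sup>+s. ennreal \<bar>FB f s\<bar> \<partial>lborel) \<le> ennreal l1"
      by (rule L1_le[OF FB_measurable[OF f] l1 P1])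
    have "J f l2 \<le> ennreal K * Phi (VB f) l2"
      unfolding K_def by (rule J_le_P[OF f l2])
    also have "\<dots> \<le> ennreal K * 1" by (intro mult_left_mono P2) auto
    finally show "J f l2 \<le> ennreal K" by simp
    show "(\<integral>\<^sup>+s. ?psi s * indicator Uc s \<partial>lborel) \<le> ennreal Ps"
      unfolding Ps_def by (rule Psi_bound)
  qed auto
  also have "\<dots> = ennreal (l1 + (3 * l2 * K + 4 * l2 * Ps))"
    using l1 l2 K1 Ps0 by (simp add: ennreal_mult[symmetric] ennreal_plus[symmetric] del: ennreal_plus)
  finally have L: "LL f \<le> ennreal (l1 + (3 * l2 * K + 4 * l2 * Ps))" .
  have "orlicz_norm LlogL f + LL f \<le> ennreal lam + ennreal (l1 + (3 * l2 * K + 4 * l2 * Ps))"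
    using N L by (rule add_mono)
  also have "\<dots> = ennreal (lam + (l1 + (3 * l2 * K + 4 * l2 * Ps)))"
    using lam l1 l2 K1 Ps0 by (simp add: ennreal_plus[symmetric] del: ennreal_plus)
  also have "\<dots> \<le> ennreal ((5 * K + 1 + 4 * Ps) * (l1 + l2))"
  proof (intro ennreal_leI)
    have "0 \<le> (3 * K + 4 * Ps) * l1" using K1 Ps0 l1 by simp
    then show "lam + (l1 + (3 * l2 * K + 4 * l2 * Ps)) \<le> (5 * K + 1 + 4 * Ps) * (l1 + l2)"
      unfolding lam_def using l2 by (simp add: algebra_simps)
  qed
  finally show ?thesis unfolding K_def Ps_def .
qed

abbreviation Clc :: "'a::euclidean_space itself \<Rightarrow> real" where
  "Clc T \<equiv> 5 * Kc T + 1 + 4 * Psic T"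

abbreviation Cuc :: "'a::euclidean_space itself \<Rightarrow> real" where
  "Cuc T \<equiv> 1 + Kc T * (1 + 2 * real DIM('a))"

lemma Clc_ge1: "1 \<le> Clc TYPE('a::euclidean_space)"
  using Kc_ge1[where 'a='a] Psic_nonneg[where 'a='a] by linarith

lemma Cuc_ge1: "1 \<le> Cuc TYPE('a::euclidean_space)"
  using Kc_ge1[where 'a='a] by simp

definition Sset :: "('a::euclidean_space \<Rightarrow> real) \<Rightarrow> ennreal set" where
  "Sset u = {ennreal l | l. l > 0 \<and> Phi u l \<le> 1}"

lemma orlicz_norm_Sset: "orlicz_norm LlogL u = Inf (Sset u)"
  by (simp add: orlicz_norm_eq Sset_def)

lemma main_lower:
  fixes f :: "'a::euclidean_space \<Rightarrow> real"
  assumes f [measurable]: "f \<in> borel_measurable borel"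
  shows "ennreal (1 / Clc TYPE('a)) * (orlicz_norm LlogL f + LL f)
    \<le> orlicz_norm LlogL (FB f) + orlicz_norm LlogL (VB f)"
proof -
  define C where "C = Clc TYPE('a)"
  have C1: "1 \<le> C" unfolding C_def by (rule Clc_ge1)
  have "ennreal (1 / C) * (orlicz_norm LlogL f + LL f) \<le> ennreal 1 * (Inf (Sset (FB f)) + Inf (Sset (VB f)))"
  proof (rule le_Inf_sum)
    fix a b assume "a \<in> Sset (FB f)" "b \<in> Sset (VB f)"
    then obtain l1 l2 where a: "a = ennreal l1" "0 < l1" "Phi (FB f) l1 \<le> 1"
      and b: "b = ennreal l2" "0 < l2" "Phi (VB f) l2 \<le> 1"
      by (auto simp: Sset_def)
    have "ennreal (1 / C) * (orlicz_norm LlogL f + LL f) \<le> ennreal (1 / C) * ennreal (C * (l1 + l2))"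
      unfolding C_def by (intro mult_left_mono lower_bound[OF f a(2,3) b(2,3)]) auto
    also have "\<dots> = ennreal (l1 + l2)"
      using C1 a b by (simp add: ennreal_mult[symmetric])
    also have "\<dots> = ennreal 1 * (a + b)"
      using a b by (simp add: ennreal_plus)
    finally show "ennreal (1 / C) * (orlicz_norm LlogL f + LL f) \<le> ennreal 1 * (a + b)" .
  qed simp
  then show ?thesis unfolding C_def by (simp add: orlicz_norm_Sset)
qed

lemma main_upper:
  fixes f :: "'a::euclidean_space \<Rightarrow> real"
  assumes f [measurable]: "f \<in> borel_measurable borel"
  shows "orlicz_norm LlogL (FB f) + orlicz_norm LlogL (VB f)
    \<le> ennreal (Cuc TYPE('a)) * (orlicz_norm LlogL f + LL f)"
proof -
  define K where "K = Kc TYPE('a)"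
  have K1: "1 \<le> K" unfolding K_def by (rule Kc_ge1)
  define \<beta> where "\<beta> = K * (1 + 2 * real DIM('a))"
  have b1: "1 \<le> \<beta>"
  proof -
    have "K * 1 \<le> K * (1 + 2 * real DIM('a))"
      using K1 by (intro mult_left_mono) auto
    then have "K \<le> \<beta>" by (simp add: \<beta>_def)
    then show ?thesis using K1 by linarith
  qed
  have N1: "orlicz_norm LlogL (FB f) \<le> orlicz_norm LlogL f"
    unfolding orlicz_norm_Sset
  proof (rule Inf_superset_mono)
    show "Sset f \<subseteq> Sset (FB f)"
    proof
      fix x assume "x \<in> Sset f"
      then obtain l where l: "x = ennreal l" "0 < l" "Phi f l \<le> 1" by (auto simp: Sset_def)
      have "Phi (FB f) l \<le> Phi f l"
        unfolding Phi_def using l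
        by (intro nn_integral_mono ennreal_leI LlogL_mono divide_right_mono)
          (auto simp: FB_def indicator_def)
      then show "x \<in> Sset (FB f)" using l by (auto simp: Sset_def)
    qed
  qed
  have N2: "orlicz_norm LlogL (VB f) \<le> ennreal \<beta> * (orlicz_norm LlogL f + LL f)"
  proof -
    have "orlicz_norm LlogL (VB f) \<le> ennreal \<beta> * (Inf (Sset f) + Inf {ennreal a | a. 0 < a \<and> LL f \<le> ennreal a})"
    proof (rule le_Inf_sum)
      fix x y assume "x \<in> Sset f" "y \<in> {ennreal a | a. 0 < a \<and> LL f \<le> ennreal a}"
      then obtain l1 a where x: "x = ennreal l1" "0 < l1" "Phi f l1 \<le> 1"
        and y: "y = ennreal a" "0 < a" "LL f \<le> ennreal a"
        by (auto simp: Sset_def)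
      have "orlicz_norm LlogL (VB f) \<le> ennreal (\<beta> * (l1 + a))"
        unfolding \<beta>_def K_def using upper_N2[OF f x(2,3) y(2,3)] by (simp add: mult.assoc)
      also have "\<dots> = ennreal \<beta> * (x + y)"
        using x y b1 by (simp add: ennreal_mult ennreal_plus)
      finally show "orlicz_norm LlogL (VB f) \<le> ennreal \<beta> * (x + y)" .
    qed (use b1 in simp)
    then show ?thesis by (simp add: orlicz_norm_Sset Inf_ennreal_above)
  qed
  have "orlicz_norm LlogL (FB f) + orlicz_norm LlogL (VB f)
      \<le> (orlicz_norm LlogL f + LL f) + ennreal \<beta> * (orlicz_norm LlogL f + LL f)"
    using N1 N2 by (intro add_mono) (auto intro: add_increasing2)
  also have "\<dots> = ennreal (1 + \<beta>) * (orlicz_norm LlogL f + LL f)"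
    using b1 by (simp add: ennreal_plus distrib_right)
  finally show ?thesis by (simp add: \<beta>_def K_def)
qed


lemma Phi_cong_AE: "AE x in lborel. u x = v x \<Longrightarrow> Phi u l = Phi v l"
  unfolding Phi_def by (rule nn_integral_cong_AE) auto

lemma orlicz_cong_AE: "AE x in lborel. u x = v x \<Longrightarrow> orlicz_norm LlogL u = orlicz_norm LlogL v"
  unfolding orlicz_norm_eq using Phi_cong_AE[of u v] by simp

lemma wt_pos: "t \<noteq> 0 \<Longrightarrow> 0 < wt t"
  by (simp add: wt_def)

lemma wt_zero: "wt (0::'a::euclidean_space) = 0"
  using DIM_positive[where 'a='a] by (simp add: wt_def)

lemma VB_cong_AE:
  fixes f g :: "'a::euclidean_space \<Rightarrow> real"
  assumes N: "N \<in> null_sets lborel" and fg: "\<And>x. x \<notin> N \<Longrightarrow> f x = g x"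
  shows "AE t in lborel. VB f t = VB g t"
proof -
  have Nb [measurable]: "N \<in> sets borel" using N by (auto simp: null_sets_def)
  have A: "(\<integral>\<^sup>+t. indicator N (invm t) * ennreal (wt t) * indicator Bc t \<partial>lborel)
      \<le> ennreal (Kc TYPE('a)) * (\<integral>\<^sup>+s. indicator N s * indicator Uc s \<partial>lborel)"
    by (rule cv_upper) measurable
  have "(\<integral>\<^sup>+s. indicator N s * indicator Uc s \<partial>lborel) \<le> (\<integral>\<^sup>+s. indicator N s \<partial>lborel)"
    by (intro nn_integral_mono) (auto simp: indicator_def)
  also have "\<dots> = 0" using N by (simp add: null_sets_def)
  finally have B: "(\<integral>\<^sup>+s. indicator N s * indicator Uc s \<partial>lborel) = 0" by simp
  have "(\<integral>\<^sup>+t. indicator N (invm t) * ennreal (wt t) * indicator Bc t \<partial>lborel) = 0"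
    using A unfolding B by simp
  then have "AE t in lborel. indicator N (invm t) * ennreal (wt t) * indicator Bc t = (0::ennreal)"
    by (subst (asm) nn_integral_0_iff_AE) auto
  then show ?thesis
  proof eventually_elim
    case (elim t)
    show ?case
    proof (cases "t \<in> ball 0 1")
      case True
      show ?thesis
      proof (cases "t = 0")
        case True
        then show ?thesis by (simp add: VB_def Vop_eq wt_zero)
      next
        case False
        then have "t \<in> Bc" using \<open>t \<in> ball 0 1\<close> by (auto simp: Bc_def)
        with elim False have "invm t \<notin> N"
          using wt_pos[OF False] by (auto simp: indicator_def)
        then show ?thesis by (simp add: VB_def Vop_eq fg)
      qed
    next
      case False
      then show ?thesis by (simp add: VB_def)
    qed
  qed
qed

theorem proposition5p10:
  shows "\<exists>c C::real. 0 < c \<and> c \<le> C \<and>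
    (\<forall>f :: 'a::euclidean_space \<Rightarrow> real. f \<in> borel_measurable lebesgue \<longrightarrow>
      ennreal c * (orlicz_norm LlogL f + (\<integral>\<^sup>+ s. ennreal (\<bar>f s\<bar> * ln (1 + norm s)) \<partial>lebesgue))
        \<le> orlicz_norm LlogL (\<lambda>x. f x * indicator (ball 0 1) x)
          + orlicz_norm LlogL (\<lambda>x. Vop f x * indicator (ball 0 1) x)
      \<and> orlicz_norm LlogL (\<lambda>x. f x * indicator (ball 0 1) x)
          + orlicz_norm LlogL (\<lambda>x. Vop f x * indicator (ball 0 1) x)
        \<le> ennreal C * (orlicz_norm LlogL f + (\<integral>\<^sup>+ s. ennreal (\<bar>f s\<bar> * ln (1 + norm s)) \<partial>lebesgue)))"
proof -
  define c where "c = 1 / Clc TYPE('a)"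
  define C where "C = Cuc TYPE('a)"
  have C1: "1 \<le> Clc TYPE('a)" by (rule Clc_ge1)
  show ?thesis
  proof (rule exI[of _ c], rule exI[of _ C], intro conjI allI impI)
  show "0 < c" using C1 by (simp add: c_def)
  show "c \<le> C"
  proof -
    have "1 / Clc TYPE('a) \<le> 1" using C1 by simp
    then show ?thesis using Cuc_ge1[where 'a='a] unfolding c_def C_def by linarith
  qed
  fix f :: "'a \<Rightarrow> real"
  assume "f \<in> borel_measurable lebesgue"
  then have "\<exists>g'\<in>borel_measurable lborel. AE x in lborel. f x = g' x"
    by (rule completion_ex_borel_measurable_real)
  then obtain g where g: "g \<in> borel_measurable lborel" and fg: "AE x in lborel. f x = g x"
    by blast
  have meq: "borel_measurable lborel = (borel_measurable borel :: ('a \<Rightarrow> real) set)"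
    by (rule measurable_cong_sets) auto
  have gb: "g \<in> borel_measurable borel" using g by (simp only: meq)
  have "\<exists>N\<in>null_sets lborel. {x \<in> space lborel. \<not> (f x = g x)} \<subseteq> N"
    using fg by (simp only: eventually_ae_filter)
  then obtain N where N: "N \<in> null_sets lborel" and Nsub: "{x \<in> space lborel. \<not> (f x = g x)} \<subseteq> N"
    by (elim bexE)
  have fgN: "f x = g x" if "x \<notin> N" for x
  proof (rule ccontr)
    assume "f x \<noteq> g x"
    then have "x \<in> {x \<in> space lborel. \<not> (f x = g x)}" by simp
    with Nsub that show False by blast
  qed
  have eqN: "orlicz_norm LlogL f = orlicz_norm LlogL g"
    by (rule orlicz_cong_AE[OF fg])
  have eqF: "orlicz_norm LlogL (\<lambda>x. f x * indicator (ball 0 1) x) = orlicz_norm LlogL (FB g)"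
    unfolding FB_def by (rule orlicz_cong_AE) (use fg in auto)
  have eqV: "orlicz_norm LlogL (\<lambda>x. Vop f x * indicator (ball 0 1) x) = orlicz_norm LlogL (VB g)"
    using orlicz_cong_AE[OF VB_cong_AE[OF N fgN]] by (simp add: VB_def[abs_def])
  have eqL: "(\<integral>\<^sup>+ s. ennreal (\<bar>f s\<bar> * ln (1 + norm s)) \<partial>lebesgue) = LL g"
    unfolding LL_def nn_integral_completion by (rule nn_integral_cong_AE) (use fg in auto)
  show "ennreal c * (orlicz_norm LlogL f + (\<integral>\<^sup>+ s. ennreal (\<bar>f s\<bar> * ln (1 + norm s)) \<partial>lebesgue))
        \<le> orlicz_norm LlogL (\<lambda>x. f x * indicator (ball 0 1) x)
          + orlicz_norm LlogL (\<lambda>x. Vop f x * indicator (ball 0 1) x)"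
    unfolding eqN eqF eqV eqL c_def by (rule main_lower[OF gb])
  show "orlicz_norm LlogL (\<lambda>x. f x * indicator (ball 0 1) x)
          + orlicz_norm LlogL (\<lambda>x. Vop f x * indicator (ball 0 1) x)
        \<le> ennreal C * (orlicz_norm LlogL f + (\<integral>\<^sup>+ s. ennreal (\<bar>f s\<bar> * ln (1 + norm s)) \<partial>lebesgue))"
    unfolding eqN eqF eqV eqL C_def by (rule main_upper[OF gb])
  qed
qed

end
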